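(* Let $P\subset\mathbb R^n$ be an $n$-dimensional strongly monotypic polytope and let $X=N(P)$ be its set of facet normals. Then $X$ contains some $k\ge 1$ pairwise disjoint subsets $X_1,\dots,X_k$ such that: (i) each $X_i$ is the vertex set of a simplex whose relative interior contains $0$; (ii) the linear spaces $\operatorname{span} X_1,\dots,\operatorname{span} X_k$ are linearly independent (i.e., their sum is direct); and (iii) $\operatorname{span} X_1\oplus\cdots\oplus\operatorname{span} X_k=\mathbb R^n$.
   Context: For a polytope $P$, $N(P)$ denotes the set of outer unit normal vectors of the facets of $P$. A polytope $P$ is called strongly monotypic if for every polytope $Q$ with $N(Q)=N(P)$, the arrangement of the hyperplanes containing the facets of $P$ and the arrangement of the hyperplanes containing the facets of $Q$ are combinatorially equivalent. *)

theory Defs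
  imports "HOL-Analysis.Analysis"
begin

definition supp_val :: "'a::euclidean_space set \<Rightarrow> 'a \<Rightarrow> real" where
  "supp_val P u = (SUP y\<in>P. u \<bullet> y)"

definition facet_normals :: "'a::euclidean_space set \<Rightarrow> 'a set" where
  "facet_normals P = {u. norm u = 1 \<and>
      (\<exists>F. F facet_of P \<and> F = P \<inter> {x. u \<bullet> x = supp_val P u})}"

text \<open>Cells (faces) of the arrangement of the facet hyperplanes of P, indexed by
  sign vectors on the normals: the hyperplane belonging to u is {x. u.x = supp_val P u}.\<close>
definition arr_cell :: "'a::euclidean_space set \<Rightarrow> ('a \<Rightarrow> real) \<Rightarrow> 'a set" where
  "arr_cell P \<sigma> = {x. \<forall>u\<in>facet_normals P. sgn (u \<bullet> x - supp_val P u) = \<sigma> u}"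

text \<open>Combinatorial equivalence of the two arrangements, hyperplanes corresponding
  via their common normal vectors: the same sign vectors are realized.\<close>
definition arr_comb_equiv :: "'a::euclidean_space set \<Rightarrow> 'a set \<Rightarrow> bool" where
  "arr_comb_equiv P Q \<longleftrightarrow> (\<forall>\<sigma>. arr_cell P \<sigma> = {} \<longleftrightarrow> arr_cell Q \<sigma> = {})"

definition strongly_monotypic :: "'a::euclidean_space set \<Rightarrow> bool" where
  "strongly_monotypic P \<longleftrightarrow> polytope P \<and>
     (\<forall>Q. polytope Q \<and> facet_normals Q = facet_normals P \<longrightarrow> arr_comb_equiv P Q)"

end

theory Submission
  imports Defs
begin

definition spanF :: "('i \<Rightarrow> 'v::real_vector) \<Rightarrow> 'i set \<Rightarrow> 'v set" where
  "spanF f Z = range (\<lambda>a. \<Sum>z\<in>Z. a z *\<^sub>R f z)"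

definition PC :: "('i \<Rightarrow> 'v::real_vector) \<Rightarrow> 'v set \<Rightarrow> 'i set \<Rightarrow> bool" where
  "PC f L Z \<longleftrightarrow> finite Z \<and> Z \<noteq> {} \<and> (\<exists>lam. (\<forall>z\<in>Z. lam z > 0) \<and> (\<Sum>z\<in>Z. lam z *\<^sub>R f z) \<in> L \<and>
      (\<forall>e. (\<Sum>z\<in>Z. e z *\<^sub>R f z) \<in> L \<longrightarrow> (\<exists>s. \<forall>z\<in>Z. e z = s * lam z)))"

definition TC :: "('i \<Rightarrow> 'v::real_vector) \<Rightarrow> 'v set \<Rightarrow> 'i set \<Rightarrow> bool" where
  "TC f L I \<longleftrightarrow> (\<forall>i\<in>I. \<exists>c. (\<forall>j\<in>I. c j \<ge> 0) \<and> c i > 0 \<and> (\<Sum>j\<in>I. c j *\<^sub>R f j) \<in> L)"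

definition SP :: "('i \<Rightarrow> 'v::real_vector) \<Rightarrow> 'v set \<Rightarrow> 'i set \<Rightarrow> bool" where
  "SP f L I \<longleftrightarrow> (\<forall>c. (\<Sum>j\<in>I. c j *\<^sub>R f j) \<in> L \<and> (\<exists>j\<in>I. c j \<noteq> 0) \<and>
      (\<forall>e. (\<forall>j\<in>I. c j = 0 \<longrightarrow> e j = 0) \<and> (\<Sum>j\<in>I. e j *\<^sub>R f j) \<in> L \<longrightarrow> (\<exists>s. \<forall>j\<in>I. e j = s * c j))
      \<longrightarrow> card {j\<in>I. c j > 0} \<le> 1 \<or> card {j\<in>I. c j < 0} \<le> 1)"

lemma PC_pos_case:
  assumes fin: "finite S" and sub: "subspace L"
    and kap: "\<forall>z\<in>S. kap z > 0" "(\<Sum>z\<in>S. kap z *\<^sub>R f z) \<in> L"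
    and min: "\<not>(\<exists>S' k'. S' \<subset> S \<and> S' \<noteq> {} \<and> (\<forall>z\<in>S'. k' z > 0) \<and> (\<Sum>z\<in>S'. k' z *\<^sub>R f z) \<in> L)"
    and e: "(\<Sum>z\<in>S. e z *\<^sub>R f z) \<in> L" and pos: "\<exists>z\<in>S. e z > 0"
  shows "\<exists>s. \<forall>z\<in>S. e z = s * kap z"
proof -
  define P where "P = {z\<in>S. e z > 0}"
  have Pfin: "finite P" and Pne: "P \<noteq> {}" using fin pos by (auto simp: P_def)
  define t where "t = Min ((\<lambda>z. kap z / e z) ` P)"
  have "t \<in> (\<lambda>z. kap z / e z) ` P" unfolding t_def using Pfin Pne by (intro Min_in) auto
  then obtain z0 where z0: "z0 \<in> P" "t = kap z0 / e z0" by auto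
  have tpos: "t > 0" using z0 kap by (auto simp: P_def)
  have tle: "t \<le> kap z / e z" if "z \<in> P" for z
    unfolding t_def using Pfin that by auto
  define d where "d z = kap z - t * e z" for z
  have dge: "d z \<ge> 0" if "z \<in> S" for z
  proof (cases "e z > 0")
    case True
    then have "t \<le> kap z / e z" using tle that by (auto simp: P_def)
    then have "t * e z \<le> kap z" using True by (simp add: pos_le_divide_eq)
    then show ?thesis by (simp add: d_def)
  next
    case False
    then have "t * e z \<le> 0" using tpos by (simp add: mult_nonneg_nonpos)
    then show ?thesis using kap that by (auto simp: d_def intro: add_pos_nonneg)
  qed
  have dz0: "d z0 = 0" using z0 by (auto simp: d_def P_def)
  define S' where "S' = {z\<in>S. d z > 0}"
  have "S' \<subset> S"
  proof -
    have "z0 \<in> S" "z0 \<notin> S'" using z0 dz0 by (auto simp: S'_def P_def)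
    then show ?thesis unfolding S'_def by blast
  qed
  have sumeq: "(\<Sum>z\<in>S'. d z *\<^sub>R f z) = (\<Sum>z\<in>S. d z *\<^sub>R f z)"
    by (rule sum.mono_neutral_left) (use fin dge in \<open>force simp: S'_def less_le\<close>)+
  also have "\<dots> = (\<Sum>z\<in>S. kap z *\<^sub>R f z) - t *\<^sub>R (\<Sum>z\<in>S. e z *\<^sub>R f z)"
    by (simp add: d_def scaleR_diff_left sum_subtractf scaleR_sum_right)
  also have "\<dots> \<in> L" using kap(2) e sub by (simp add: subspace_diff subspace_scale)
  finally have inL: "(\<Sum>z\<in>S'. d z *\<^sub>R f z) \<in> L" .
  have "S' = {}"
  proof (rule ccontr)
    assume "S' \<noteq> {}"
    then show False using min \<open>S' \<subset> S\<close> inL by (auto simp: S'_def)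
  qed
  then have "\<forall>z\<in>S. d z = 0" using dge by (force simp: S'_def)
  then have "\<forall>z\<in>S. e z = (1/t) * kap z" using tpos by (auto simp: d_def field_simps)
  then show ?thesis by blast
qed

lemma PC_from_min:
  assumes fin: "finite S" and sub: "subspace L" and ne: "S \<noteq> {}"
    and kap: "\<forall>z\<in>S. kap z > 0" "(\<Sum>z\<in>S. kap z *\<^sub>R f z) \<in> L"
    and min: "\<And>S' k'. S' \<subset> S \<Longrightarrow> S' \<noteq> {} \<Longrightarrow> (\<forall>z\<in>S'. k' z > 0) \<Longrightarrow> (\<Sum>z\<in>S'. k' z *\<^sub>R f z) \<in> L \<Longrightarrow> False"
  shows "PC f L S"
proof -
  have min: "\<not>(\<exists>S' k'. S' \<subset> S \<and> S' \<noteq> {} \<and> (\<forall>z\<in>S'. k' z > 0) \<and> (\<Sum>z\<in>S'. k' z *\<^sub>R f z) \<in> L)"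
    using min by blast
  show ?thesis unfolding PC_def
proof (intro conjI exI[of _ kap] allI impI)
  fix e assume e: "(\<Sum>z\<in>S. e z *\<^sub>R f z) \<in> L"
  show "\<exists>s. \<forall>z\<in>S. e z = s * kap z"
  proof (cases "\<exists>z\<in>S. e z > 0")
    case True
    then show ?thesis using PC_pos_case[of S L kap f e, OF fin sub kap(1) kap(2) min e] by blast
  next
    case False
    show ?thesis
    proof (cases "\<exists>z\<in>S. e z < 0")
      case True
      have e': "(\<Sum>z\<in>S. (- e z) *\<^sub>R f z) \<in> L"
        using e sub by (simp add: sum_negf subspace_neg)
      obtain s where "\<forall>z\<in>S. - e z = s * kap z"
        using PC_pos_case[of S L kap f "\<lambda>z. - e z", OF fin sub kap(1) kap(2) min e'] True by force
      then have "\<forall>z\<in>S. e z = (-s) * kap z" by (metis minus_minus mult_minus_left)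
      then show ?thesis by blast
    next
      case False2: False
      then have "\<forall>z\<in>S. e z = 0 * kap z" using False by force
      then show ?thesis by blast
    qed
  qed
qed (use assms in auto)
qed

lemma exists_PC:
  assumes fin: "finite J" and sub: "subspace L" and ne: "J \<noteq> {}" and tc: "TC f L J"
  shows "\<exists>C\<subseteq>J. PC f L C"
proof -
  define Q where "Q S \<longleftrightarrow> S \<subseteq> J \<and> S \<noteq> {} \<and> (\<exists>k. (\<forall>z\<in>S. k z > 0) \<and> (\<Sum>z\<in>S. k z *\<^sub>R f z) \<in> L)" for S
  obtain i where i: "i \<in> J" using ne by auto
  obtain c where c: "\<forall>j\<in>J. c j \<ge> 0" "c i > 0" "(\<Sum>j\<in>J. c j *\<^sub>R f j) \<in> L"
    using tc i unfolding TC_def by blast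
  define S0 where "S0 = {j\<in>J. c j > 0}"
  have "(\<Sum>j\<in>S0. c j *\<^sub>R f j) = (\<Sum>j\<in>J. c j *\<^sub>R f j)"
    by (rule sum.mono_neutral_left) (use fin c(1) in \<open>force simp: S0_def less_le\<close>)+
  then have "Q S0" using c i unfolding Q_def S0_def by auto
  then obtain S where QS: "Q S" and Smin: "\<And>S'. Q S' \<Longrightarrow> card S \<le> card S'"
    using ex_has_least_nat[of Q S0 card] by blast
  from QS obtain k where SJ: "S \<subseteq> J" and Sne: "S \<noteq> {}" and k: "\<forall>z\<in>S. k z > 0" "(\<Sum>z\<in>S. k z *\<^sub>R f z) \<in> L"
    unfolding Q_def by blast
  have finS: "finite S" using SJ fin finite_subset by blast
  have "PC f L S"
  proof (rule PC_from_min[OF finS sub Sne k])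
    fix S' k' assume "S' \<subset> S" "S' \<noteq> {}" "\<forall>z\<in>S'. 0 < k' z" "(\<Sum>z\<in>S'. k' z *\<^sub>R f z) \<in> L"
    then have "Q S'" using SJ unfolding Q_def by blast
    then have "card S \<le> card S'" by (rule Smin)
    moreover have "card S' < card S" using \<open>S' \<subset> S\<close> finS psubset_card_mono by blast
    ultimately show False by simp
  qed
  then show ?thesis using SJ by blast
qed

lemma exists_minimal_J:
  assumes fin: "finite I" and sub: "subspace L" and tc: "TC f L I"
  shows "\<exists>J\<subseteq>I. TC f L J \<and> (\<forall>x\<in>spanF f I. \<exists>y\<in>spanF f J. x - y \<in> L) \<and>
     (\<forall>c\<in>J. \<not>(\<exists>a. (\<forall>j\<in>J-{c}. a j \<ge> 0) \<and> f c - (\<Sum>j\<in>J-{c}. a j *\<^sub>R f j) \<in> L))"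
proof -
  define Q where "Q J \<longleftrightarrow> J \<subseteq> I \<and> TC f L J \<and> (\<forall>x\<in>spanF f I. \<exists>y\<in>spanF f J. x - y \<in> L)" for J
  have "Q I" unfolding Q_def using tc sub by (metis diff_self order_refl subspace_0)
  then obtain J where QJ: "Q J" and Jmin: "\<And>J'. Q J' \<Longrightarrow> card J \<le> card J'"
    using ex_has_least_nat[of Q I card] by blast
  have JI: "J \<subseteq> I" and tcJ: "TC f L J" and spJ: "\<forall>x\<in>spanF f I. \<exists>y\<in>spanF f J. x - y \<in> L"
    using QJ unfolding Q_def by auto
  have finJ: "finite J" using JI fin finite_subset by blast
  have "\<not>(\<exists>a. (\<forall>j\<in>J-{c}. a j \<ge> 0) \<and> f c - (\<Sum>j\<in>J-{c}. a j *\<^sub>R f j) \<in> L)" if cJ: "c \<in> J" for c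
  proof
    assume "\<exists>a. (\<forall>j\<in>J-{c}. a j \<ge> 0) \<and> f c - (\<Sum>j\<in>J-{c}. a j *\<^sub>R f j) \<in> L"
    then obtain a where a: "\<forall>j\<in>J-{c}. a j \<ge> 0" and aL: "f c - (\<Sum>j\<in>J-{c}. a j *\<^sub>R f j) \<in> L" by blast
    have sumJ: "(\<Sum>j\<in>J. g j) = g c + (\<Sum>j\<in>J-{c}. g j)" for g :: "_ \<Rightarrow> 'b::real_vector"
      using sum.remove[OF finJ cJ] .
    have "TC f L (J - {c})"
      unfolding TC_def
    proof
      fix i assume i: "i \<in> J - {c}"
      obtain c0 where c0: "\<forall>j\<in>J. c0 j \<ge> 0" "c0 i > 0" "(\<Sum>j\<in>J. c0 j *\<^sub>R f j) \<in> L"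
        using tcJ i unfolding TC_def by blast
      define c' where "c' j = c0 j + c0 c * a j" for j
      have "\<forall>j\<in>J-{c}. c' j \<ge> 0" using c0(1) a cJ by (auto simp: c'_def)
      moreover have "c' i > 0" using c0 a i cJ by (auto simp: c'_def intro!: add_pos_nonneg)
      moreover have "(\<Sum>j\<in>J-{c}. c' j *\<^sub>R f j) = (\<Sum>j\<in>J. c0 j *\<^sub>R f j) - c0 c *\<^sub>R (f c - (\<Sum>j\<in>J-{c}. a j *\<^sub>R f j))"
        by (simp add: c'_def sumJ scaleR_add_left sum.distrib scaleR_sum_right scaleR_diff_right algebra_simps)
      then have "(\<Sum>j\<in>J-{c}. c' j *\<^sub>R f j) \<in> L" using c0(3) aL sub by (simp add: subspace_diff subspace_scale)
      ultimately show "\<exists>cc. (\<forall>j\<in>J - {c}. 0 \<le> cc j) \<and> 0 < cc i \<and> (\<Sum>j\<in>J - {c}. cc j *\<^sub>R f j) \<in> L" by blast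
    qed
    moreover have "\<forall>x\<in>spanF f I. \<exists>y\<in>spanF f (J-{c}). x - y \<in> L"
    proof
      fix x assume "x \<in> spanF f I"
      then obtain y where y: "y \<in> spanF f J" "x - y \<in> L" using spJ by blast
      then obtain b where b: "y = (\<Sum>j\<in>J. b j *\<^sub>R f j)" unfolding spanF_def by blast
      define b' where "b' j = b j + b c * a j" for j
      have "(\<Sum>j\<in>J-{c}. b' j *\<^sub>R f j) = y - b c *\<^sub>R (f c - (\<Sum>j\<in>J-{c}. a j *\<^sub>R f j))"
        by (simp add: b b'_def sumJ scaleR_add_left sum.distrib scaleR_sum_right scaleR_diff_right algebra_simps)
      then have "x - (\<Sum>j\<in>J-{c}. b' j *\<^sub>R f j) = (x - y) + b c *\<^sub>R (f c - (\<Sum>j\<in>J-{c}. a j *\<^sub>R f j))"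
        by simp
      also have "\<dots> \<in> L" using y(2) aL sub by (simp add: subspace_add subspace_scale)
      finally show "\<exists>y\<in>spanF f (J-{c}). x - y \<in> L" unfolding spanF_def by blast
    qed
    ultimately have "Q (J - {c})" using JI unfolding Q_def by blast
    then have "card J \<le> card (J - {c})" by (rule Jmin)
    moreover have "card (J - {c}) < card J" using finJ cJ by (meson card_Diff1_less)
    ultimately show False by simp
  qed
  then show ?thesis using JI tcJ spJ by blast
qed

definition Lext :: "('i \<Rightarrow> 'v::real_vector) \<Rightarrow> 'v set \<Rightarrow> 'i set \<Rightarrow> 'v set" where
  "Lext f L C = {x. \<exists>l\<in>L. \<exists>e. x = l + (\<Sum>z\<in>C. e z *\<^sub>R f z)}"

lemma Lext_subspace:
  assumes sub: "subspace L" shows "subspace (Lext f L C)"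
  unfolding subspace_def
proof (intro conjI ballI allI)
  show "0 \<in> Lext f L C" unfolding Lext_def using sub
    by (auto intro!: bexI[of _ 0] exI[of _ "\<lambda>_. 0"] simp: subspace_0)
next
  fix x y assume "x \<in> Lext f L C" "y \<in> Lext f L C"
  then obtain l1 e1 l2 e2 where "l1 \<in> L" "l2 \<in> L" "x = l1 + (\<Sum>z\<in>C. e1 z *\<^sub>R f z)" "y = l2 + (\<Sum>z\<in>C. e2 z *\<^sub>R f z)"
    unfolding Lext_def by blast
  then have "x + y = (l1 + l2) + (\<Sum>z\<in>C. (e1 z + e2 z) *\<^sub>R f z)" "l1 + l2 \<in> L"
    using sub by (auto simp: scaleR_add_left sum.distrib subspace_add)
  then show "x + y \<in> Lext f L C" unfolding Lext_def mem_Collect_eq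
    by (intro bexI[of _ "l1+l2"] exI[of _ "\<lambda>z. e1 z + e2 z"]) auto
next
  fix x and c :: real assume "x \<in> Lext f L C"
  then obtain l1 e1 where "l1 \<in> L" "x = l1 + (\<Sum>z\<in>C. e1 z *\<^sub>R f z)"
    unfolding Lext_def by blast
  then have "c *\<^sub>R x = c *\<^sub>R l1 + (\<Sum>z\<in>C. (c * e1 z) *\<^sub>R f z)" "c *\<^sub>R l1 \<in> L"
    using sub by (auto simp: scaleR_add_right scaleR_sum_right subspace_scale)
  then show "c *\<^sub>R x \<in> Lext f L C" unfolding Lext_def mem_Collect_eq
    by (intro bexI[of _ "c *\<^sub>R l1"] exI[of _ "\<lambda>z. c * e1 z"]) auto
qed

lemma Lext_sup: "subspace L \<Longrightarrow> x \<in> L \<Longrightarrow> x \<in> Lext f L C"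
  unfolding Lext_def by (auto intro!: exI[of _ "\<lambda>_. 0"])

lemma Lext_sum: "subspace L \<Longrightarrow> (\<Sum>z\<in>C. e z *\<^sub>R f z) \<in> Lext f L C"
  unfolding Lext_def by (auto intro!: bexI[of _ 0] simp: subspace_0)

lemma Lext_elem: assumes "subspace L" "finite C" "z \<in> C" shows "f z \<in> Lext f L C"
proof -
  have "(\<Sum>w\<in>C. (if w = z then 1 else 0) *\<^sub>R f w) = (\<Sum>w\<in>C. if w = z then f w else 0)"
    by (rule sum.cong) auto
  also have "\<dots> = f z" using assms by (simp add: sum.delta')
  finally have "(\<Sum>w\<in>C. (if w = z then 1 else 0) *\<^sub>R f w) = f z" .
  then show ?thesis using Lext_sum[OF assms(1), where C=C and e="\<lambda>w. if w = z then 1 else 0" and f=f] by simp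
qed

lemma Lext_mono_sub: "subspace L \<Longrightarrow> L \<subseteq> Lext f L C"
  using Lext_sup by blast

lemma sum_split3:
  assumes "finite I" "C \<subseteq> I" "I' \<subseteq> I" "I' \<inter> C = {}" "\<forall>j\<in>I-(C\<union>I'). g j = 0"
  shows "sum g I = sum g C + sum g I'"
proof -
  have "sum g I = sum g (C \<union> I')"
    by (rule sum.mono_neutral_right) (use assms in auto)
  also have "\<dots> = sum g C + sum g I'"
    by (rule sum.union_disjoint) (use assms finite_subset in auto)
  finally show ?thesis .
qed

lemma ext_min:
  assumes fin: "finite C" and ne: "C \<noteq> {}" and kpos: "\<forall>z\<in>C. kap z > 0"
    and kL: "(\<Sum>z\<in>C. kap z *\<^sub>R f z) \<in> L" and sub: "subspace L" and y: "y \<in> Lext f L C"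
  shows "\<exists>e x0. x0 \<in> C \<and> e x0 = 0 \<and> (\<forall>x\<in>C. e x \<ge> 0) \<and> y - (\<Sum>z\<in>C. e z *\<^sub>R f z) \<in> L"
proof -
  obtain l e where l: "l \<in> L" and ye: "y = l + (\<Sum>z\<in>C. e z *\<^sub>R f z)" using y unfolding Lext_def by blast
  define t where "t = Min ((\<lambda>z. e z / kap z) ` C)"
  have "t \<in> (\<lambda>z. e z / kap z) ` C" unfolding t_def using fin ne by (intro Min_in) auto
  then obtain x0 where x0: "x0 \<in> C" "t = e x0 / kap x0" by auto
  have tle: "t \<le> e z / kap z" if "z \<in> C" for z unfolding t_def using fin that by auto
  define e' where "e' z = e z - t * kap z" for z
  have "e' x0 = 0" using x0 kpos by (auto simp: e'_def)
  moreover have "\<forall>x\<in>C. e' x \<ge> 0"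
  proof
    fix x assume "x \<in> C"
    then have "t * kap x \<le> e x" using tle[of x] kpos by (simp add: pos_le_divide_eq)
    then show "e' x \<ge> 0" by (simp add: e'_def)
  qed
  moreover have "y - (\<Sum>z\<in>C. e' z *\<^sub>R f z) = l + t *\<^sub>R (\<Sum>z\<in>C. kap z *\<^sub>R f z)"
    by (simp add: ye e'_def scaleR_diff_left sum_subtractf scaleR_sum_right)
  then have "y - (\<Sum>z\<in>C. e' z *\<^sub>R f z) \<in> L" using l kL sub by (simp add: subspace_add subspace_scale)
  ultimately show ?thesis using x0 by blast
qed

lemma circ_ext:
  assumes finI: "finite I" and sub: "subspace L" and CI: "C \<subseteq> I" and I'I: "I' \<subseteq> I" and disj: "I' \<inter> C = {}"
    and circC: "\<forall>e. (\<Sum>z\<in>C. e z *\<^sub>R f z) \<in> L \<longrightarrow> (\<exists>s. \<forall>z\<in>C. e z = s * kap z)"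
    and kpos: "\<forall>z\<in>C. kap z > 0"
    and x0: "x0 \<in> C" "e0 x0 = 0"
    and circc: "\<forall>e. (\<forall>j\<in>I'. c j = 0 \<longrightarrow> e j = 0) \<and> (\<Sum>j\<in>I'. e j *\<^sub>R f j) \<in> Lext f L C \<longrightarrow> (\<exists>s. \<forall>j\<in>I'. e j = s * c j)"
    and dep: "(\<Sum>j\<in>I'. c j *\<^sub>R f j) - (\<Sum>z\<in>C. e0 z *\<^sub>R f z) \<in> L"
    and ct: "ct = (\<lambda>j. if j \<in> C then - e0 j else if j \<in> I' then c j else 0)"
  shows "(\<Sum>j\<in>I. ct j *\<^sub>R f j) \<in> L"
    and "\<forall>e. (\<forall>j\<in>I. ct j = 0 \<longrightarrow> e j = 0) \<and> (\<Sum>j\<in>I. e j *\<^sub>R f j) \<in> L \<longrightarrow> (\<exists>s. \<forall>j\<in>I. e j = s * ct j)"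
proof -
  have split: "(\<Sum>j\<in>I. g j *\<^sub>R f j) = (\<Sum>j\<in>C. g j *\<^sub>R f j) + (\<Sum>j\<in>I'. g j *\<^sub>R f j)"
    if "\<forall>j\<in>I-(C\<union>I'). g j = 0" for g
    using sum_split3[OF finI CI I'I disj, of "\<lambda>j. g j *\<^sub>R f j"] that by auto
  have ctsum: "(\<Sum>j\<in>I. ct j *\<^sub>R f j) = (\<Sum>j\<in>I'. c j *\<^sub>R f j) - (\<Sum>z\<in>C. e0 z *\<^sub>R f z)"
  proof -
    have "(\<Sum>j\<in>I. ct j *\<^sub>R f j) = (\<Sum>j\<in>C. ct j *\<^sub>R f j) + (\<Sum>j\<in>I'. ct j *\<^sub>R f j)"
      by (rule split) (auto simp: ct)
    also have "(\<Sum>j\<in>C. ct j *\<^sub>R f j) = - (\<Sum>z\<in>C. e0 z *\<^sub>R f z)"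
      by (simp add: ct sum_negf)
    also have "(\<Sum>j\<in>I'. ct j *\<^sub>R f j) = (\<Sum>j\<in>I'. c j *\<^sub>R f j)"
      by (rule sum.cong) (use disj in \<open>auto simp: ct\<close>)
    finally show ?thesis by simp
  qed
  then show "(\<Sum>j\<in>I. ct j *\<^sub>R f j) \<in> L" using dep by simp
  show "\<forall>e. (\<forall>j\<in>I. ct j = 0 \<longrightarrow> e j = 0) \<and> (\<Sum>j\<in>I. e j *\<^sub>R f j) \<in> L \<longrightarrow> (\<exists>s. \<forall>j\<in>I. e j = s * ct j)"
  proof (intro allI impI, elim conjE)
    fix e assume supp: "\<forall>j\<in>I. ct j = 0 \<longrightarrow> e j = 0" and eL: "(\<Sum>j\<in>I. e j *\<^sub>R f j) \<in> L"
    have e0out: "\<forall>j\<in>I-(C\<union>I'). e j = 0" using supp by (auto simp: ct)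
    have esplit: "(\<Sum>j\<in>I. e j *\<^sub>R f j) = (\<Sum>j\<in>C. e j *\<^sub>R f j) + (\<Sum>j\<in>I'. e j *\<^sub>R f j)"
      by (rule split[OF e0out])
    have "(\<Sum>j\<in>I'. e j *\<^sub>R f j) = (\<Sum>j\<in>I. e j *\<^sub>R f j) + (\<Sum>j\<in>C. (- e j) *\<^sub>R f j)"
      using esplit by (simp add: sum_negf)
    then have "(\<Sum>j\<in>I'. e j *\<^sub>R f j) \<in> Lext f L C" using eL unfolding Lext_def mem_Collect_eq
      by (intro bexI[of _ "\<Sum>j\<in>I. e j *\<^sub>R f j"] exI[of _ "\<lambda>j. - e j"]) auto
    moreover have "\<forall>j\<in>I'. c j = 0 \<longrightarrow> e j = 0"
    proof (intro ballI impI)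
      fix j assume "j \<in> I'" "c j = 0"
      then have "j \<in> I" "ct j = 0" using I'I disj by (auto simp: ct)
      then show "e j = 0" using supp by blast
    qed
    ultimately obtain s where s: "\<forall>j\<in>I'. e j = s * c j" using circc by blast
    define d where "d j = e j - s * ct j" for j
    have dout: "\<forall>j\<in>I-(C\<union>I'). d j = 0" using e0out by (auto simp: d_def ct)
    have dI': "\<forall>j\<in>I'. d j = 0" using s disj by (auto simp: d_def ct)
    have "(\<Sum>j\<in>I. d j *\<^sub>R f j) = (\<Sum>j\<in>I. e j *\<^sub>R f j) - s *\<^sub>R (\<Sum>j\<in>I. ct j *\<^sub>R f j)"
      by (simp add: d_def scaleR_diff_left sum_subtractf scaleR_sum_right)
    also have "\<dots> \<in> L" using eL \<open>(\<Sum>j\<in>I. ct j *\<^sub>R f j) \<in> L\<close> sub by (simp add: subspace_diff subspace_scale)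
    finally have "(\<Sum>j\<in>I. d j *\<^sub>R f j) \<in> L" .
    moreover have "(\<Sum>j\<in>I. d j *\<^sub>R f j) = (\<Sum>j\<in>C. d j *\<^sub>R f j)"
      using split[OF dout] dI' by simp
    ultimately obtain r where r: "\<forall>z\<in>C. d z = r * kap z" using circC by auto
    have "ct x0 = 0" using x0 by (simp add: ct)
    then have "e x0 = 0" using supp x0 CI by auto
    then have "d x0 = 0" using \<open>ct x0 = 0\<close> by (simp add: d_def)
    then have "r = 0" using r x0 kpos by force
    then have dC: "\<forall>z\<in>C. d z = 0" using r by simp
    have "\<forall>j\<in>I. e j = s * ct j"
    proof
      fix j assume "j \<in> I"
      then consider "j \<in> C" | "j \<in> I'" | "j \<in> I - (C \<union> I')" by blast
      then show "e j = s * ct j"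
        using dC dI' dout by cases (auto simp: d_def)
    qed
    then show "\<exists>s. \<forall>j\<in>I. e j = s * ct j" by blast
  qed
qed

lemma PC_span_in:
  assumes sub: "subspace L" and LL: "L \<subseteq> L'" and P1: "PC f L Z" and P2: "PC f L' Z"
    and v: "v \<in> spanF f Z" and vL: "v \<in> L'"
  shows "v \<in> L"
proof -
  obtain lam where lam: "\<forall>z\<in>Z. lam z > 0" "(\<Sum>z\<in>Z. lam z *\<^sub>R f z) \<in> L" and Zne: "Z \<noteq> {}"
    using P1 unfolding PC_def by blast
  obtain mu where circ: "\<forall>e. (\<Sum>z\<in>Z. e z *\<^sub>R f z) \<in> L' \<longrightarrow> (\<exists>s. \<forall>z\<in>Z. e z = s * mu z)"
    using P2 unfolding PC_def by blast
  obtain a where a: "v = (\<Sum>z\<in>Z. a z *\<^sub>R f z)" using v unfolding spanF_def by blast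
  obtain s where s: "\<forall>z\<in>Z. a z = s * mu z" using circ a vL by blast
  obtain s' where s': "\<forall>z\<in>Z. lam z = s' * mu z" using circ lam(2) LL by blast
  obtain z0 where z0: "z0 \<in> Z" using Zne by blast
  have "s' \<noteq> 0" using s' lam(1) z0 by force
  then have "\<forall>z\<in>Z. a z = (s / s') * lam z" using s s' by auto
  then have "v = (s / s') *\<^sub>R (\<Sum>z\<in>Z. lam z *\<^sub>R f z)"
    by (simp add: a scaleR_sum_right)
  then show ?thesis using lam(2) sub by (simp add: subspace_scale)
qed

lemma PC_lift:
  assumes finI: "finite I" and sub: "subspace L" and JI: "J \<subseteq> I" and CJ: "C \<subseteq> J"
    and finC: "finite C" and Cne: "C \<noteq> {}"
    and kpos: "\<forall>z\<in>C. kap z > 0" and kL: "(\<Sum>z\<in>C. kap z *\<^sub>R f z) \<in> L"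
    and circC: "\<forall>e. (\<Sum>z\<in>C. e z *\<^sub>R f z) \<in> L \<longrightarrow> (\<exists>s. \<forall>z\<in>C. e z = s * kap z)"
    and I'def: "I' = {i\<in>J-C. f i \<notin> Lext f L C}"
    and minJ: "\<forall>c\<in>J. \<not>(\<exists>a. (\<forall>j\<in>J-{c}. a j \<ge> 0) \<and> f c - (\<Sum>j\<in>J-{c}. a j *\<^sub>R f j) \<in> L)"
    and sp: "SP f L I" and ZI': "Z \<subseteq> I'" and PZ: "PC f (Lext f L C) Z"
  shows "PC f L Z"
proof -
  define L' where "L' = Lext f L C"
  have subL': "subspace L'" unfolding L'_def by (rule Lext_subspace[OF sub])
  have LL': "L \<subseteq> L'" unfolding L'_def using Lext_sup[OF sub] by blast
  have finI': "finite I'" using I'def finI JI finite_subset by (metis (no_types, lifting) Diff_subset mem_Collect_eq subsetI rev_finite_subset)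
  have I'I: "I' \<subseteq> I" using I'def JI by auto
  have CI: "C \<subseteq> I" using CJ JI by auto
  have disj: "I' \<inter> C = {}" using I'def by auto
  obtain lam where finZ: "finite Z" and Zne: "Z \<noteq> {}" and lam: "\<forall>z\<in>Z. lam z > 0" "(\<Sum>z\<in>Z. lam z *\<^sub>R f z) \<in> L'"
    and circZ: "\<forall>e. (\<Sum>z\<in>Z. e z *\<^sub>R f z) \<in> L' \<longrightarrow> (\<exists>s. \<forall>z\<in>Z. e z = s * lam z)"
    using PZ unfolding PC_def L'_def by blast
  define c where "c j = (if j \<in> Z then lam j else 0)" for j
  have csum: "(\<Sum>j\<in>I'. g j *\<^sub>R f j) = (\<Sum>j\<in>Z. g j *\<^sub>R f j)" if "\<forall>j\<in>I'-Z. g j = 0" for g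
    by (rule sum.mono_neutral_right) (use finI' ZI' that in auto)
  have cI': "(\<Sum>j\<in>I'. c j *\<^sub>R f j) = (\<Sum>z\<in>Z. lam z *\<^sub>R f z)"
    using csum[of c] by (simp add: c_def)
  have circc: "\<forall>e. (\<forall>j\<in>I'. c j = 0 \<longrightarrow> e j = 0) \<and> (\<Sum>j\<in>I'. e j *\<^sub>R f j) \<in> Lext f L C \<longrightarrow> (\<exists>s. \<forall>j\<in>I'. e j = s * c j)"
  proof (intro allI impI, elim conjE)
    fix e assume supp: "\<forall>j\<in>I'. c j = 0 \<longrightarrow> e j = 0" and eL: "(\<Sum>j\<in>I'. e j *\<^sub>R f j) \<in> Lext f L C"
    have "\<forall>j\<in>I'-Z. e j = 0" using supp by (auto simp: c_def)
    then have "(\<Sum>j\<in>Z. e j *\<^sub>R f j) \<in> L'" using eL csum[of e] unfolding L'_def by simp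
    then obtain s where "\<forall>z\<in>Z. e z = s * lam z" using circZ by blast
    then have "\<forall>j\<in>I'. e j = s * c j" using supp by (auto simp: c_def)
    then show "\<exists>s. \<forall>j\<in>I'. e j = s * c j" by blast
  qed
  have "(\<Sum>j\<in>I'. c j *\<^sub>R f j) \<in> Lext f L C" using cI' lam(2) unfolding L'_def by simp
  then obtain e0 x0 where x0: "x0 \<in> C" "e0 x0 = 0" and e0pos: "\<forall>x\<in>C. e0 x \<ge> 0"
    and dep: "(\<Sum>j\<in>I'. c j *\<^sub>R f j) - (\<Sum>z\<in>C. e0 z *\<^sub>R f z) \<in> L"
    using ext_min[OF finC Cne kpos kL sub] by blast
  define ct where "ct = (\<lambda>j. if j \<in> C then - e0 j else if j \<in> I' then c j else 0)"
  note CE = circ_ext[OF finI sub CI I'I disj circC kpos x0 circc dep ct_def]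
  have "\<exists>j\<in>I. ct j \<noteq> 0"
  proof -
    obtain z where "z \<in> Z" using Zne by blast
    then have "z \<in> I" "ct z = lam z" using ZI' I'I disj by (auto simp: ct_def c_def)
    then show ?thesis using lam(1) \<open>z \<in> Z\<close> by force
  qed
  then have cards: "card {j\<in>I. ct j > 0} \<le> 1 \<or> card {j\<in>I. ct j < 0} \<le> 1"
    using sp CE unfolding SP_def by blast
  have ZsubP: "Z \<subseteq> {j\<in>I. ct j > 0}" using ZI' I'I disj lam(1) by (auto simp: ct_def c_def)
  have "card Z \<ge> 2"
  proof (rule ccontr)
    assume "\<not> card Z \<ge> 2"
    then have "card Z = 1" using finZ Zne by (metis One_nat_def card_0_eq less_2_cases not_le)
    then obtain z where Zz: "Z = {z}" by (rule card_1_singletonE)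
    then have "lam z *\<^sub>R f z \<in> L'" using lam(2) by simp
    then have "(1 / lam z) *\<^sub>R (lam z *\<^sub>R f z) \<in> L'" using subL' by (rule subspace_scale[rotated])
    then have "f z \<in> L'" using lam(1) Zz by simp
    moreover have "z \<in> I'" using Zz ZI' by auto
    ultimately show False using I'def unfolding L'_def by auto
  qed
  moreover have "card Z \<le> card {j\<in>I. ct j > 0}" using ZsubP finI by (intro card_mono) auto
  ultimately have negle: "card {j\<in>I. ct j < 0} \<le> 1" using cards by linarith
  have negeq: "{j\<in>I. ct j < 0} = {x\<in>C. e0 x > 0}"
  proof -
    have "ct j \<ge> 0" if "j \<notin> C" for j using that lam(1) by (auto simp: ct_def c_def less_imp_le)
    then have "ct j < 0 \<longleftrightarrow> j \<in> C \<and> e0 j > 0" for j by (cases "j \<in> C") (auto simp: ct_def not_le[symmetric])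
    then show ?thesis using CI by auto
  qed
  have finN: "finite {x\<in>C. e0 x > 0}" using finC by auto
  have "(\<Sum>z\<in>Z. lam z *\<^sub>R f z) \<in> L"
  proof (cases "{x\<in>C. e0 x > 0} = {}")
    case True
    then have "\<forall>x\<in>C. e0 x = 0" using e0pos by force
    then have "(\<Sum>z\<in>C. e0 z *\<^sub>R f z) = 0" by simp
    then show ?thesis using dep cI' by simp
  next
    case False
    then obtain x1 where x1: "x1 \<in> C" "e0 x1 > 0" by blast
    have "{x\<in>C. e0 x > 0} = {x1}"
      using negle negeq finN x1 by (auto simp: card_le_Suc0_iff_eq)
    then have z: "\<forall>x\<in>C-{x1}. e0 x = 0" using e0pos by force
    have "(\<Sum>z\<in>C. e0 z *\<^sub>R f z) = e0 x1 *\<^sub>R f x1 + (\<Sum>z\<in>C-{x1}. e0 z *\<^sub>R f z)"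
      using sum.remove[OF finC x1(1)] by simp
    also have "(\<Sum>z\<in>C-{x1}. e0 z *\<^sub>R f z) = 0" using z by simp
    finally have dep1: "(\<Sum>z\<in>Z. lam z *\<^sub>R f z) - e0 x1 *\<^sub>R f x1 \<in> L" using dep cI' by simp
    define a where "a j = (if j \<in> Z then lam j / e0 x1 else 0)" for j
    have x1J: "x1 \<in> J" using x1 CJ by auto
    have ZJ: "Z \<subseteq> J - {x1}" using ZI' I'def x1 by auto
    have finJ: "finite J" using JI finI finite_subset by blast
    have "(\<Sum>j\<in>J-{x1}. a j *\<^sub>R f j) = (\<Sum>j\<in>Z. a j *\<^sub>R f j)"
      by (rule sum.mono_neutral_right) (use finJ ZJ in \<open>auto simp: a_def\<close>)
    also have "\<dots> = (1 / e0 x1) *\<^sub>R (\<Sum>z\<in>Z. lam z *\<^sub>R f z)"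
      by (simp add: a_def scaleR_sum_right)
    finally have "f x1 - (\<Sum>j\<in>J-{x1}. a j *\<^sub>R f j) = (- 1 / e0 x1) *\<^sub>R ((\<Sum>z\<in>Z. lam z *\<^sub>R f z) - e0 x1 *\<^sub>R f x1)"
      using x1(2) by (simp add: scaleR_diff_right)
    also have "\<dots> \<in> L" using dep1 sub by (rule subspace_scale[rotated])
    finally have "f x1 - (\<Sum>j\<in>J-{x1}. a j *\<^sub>R f j) \<in> L" .
    moreover have "\<forall>j\<in>J-{x1}. a j \<ge> 0" using lam(1) x1(2) by (auto simp: a_def less_imp_le)
    ultimately show ?thesis using minJ x1J by blast
  qed
  then show ?thesis unfolding PC_def
    using finZ Zne lam(1) circZ LL' by blast
qed

lemma SP_contract:
  assumes finI: "finite I" and sub: "subspace L" and JI: "J \<subseteq> I" and CJ: "C \<subseteq> J"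
    and finC: "finite C" and Cne: "C \<noteq> {}"
    and kpos: "\<forall>z\<in>C. kap z > 0" and kL: "(\<Sum>z\<in>C. kap z *\<^sub>R f z) \<in> L"
    and circC: "\<forall>e. (\<Sum>z\<in>C. e z *\<^sub>R f z) \<in> L \<longrightarrow> (\<exists>s. \<forall>z\<in>C. e z = s * kap z)"
    and I'def: "I' = {i\<in>J-C. f i \<notin> Lext f L C}"
    and sp: "SP f L I"
  shows "SP f (Lext f L C) I'"
  unfolding SP_def
proof (intro allI impI, elim conjE)
  fix c assume cdep: "(\<Sum>j\<in>I'. c j *\<^sub>R f j) \<in> Lext f L C" and cnz: "\<exists>j\<in>I'. c j \<noteq> 0"
    and circc: "\<forall>e. (\<forall>j\<in>I'. c j = 0 \<longrightarrow> e j = 0) \<and> (\<Sum>j\<in>I'. e j *\<^sub>R f j) \<in> Lext f L C \<longrightarrow> (\<exists>s. \<forall>j\<in>I'. e j = s * c j)"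
  have I'I: "I' \<subseteq> I" using I'def JI by auto
  have CI: "C \<subseteq> I" using CJ JI by auto
  have disj: "I' \<inter> C = {}" using I'def by auto
  obtain e0 x0 where x0: "x0 \<in> C" "e0 x0 = 0"
    and dep: "(\<Sum>j\<in>I'. c j *\<^sub>R f j) - (\<Sum>z\<in>C. e0 z *\<^sub>R f z) \<in> L"
    using ext_min[OF finC Cne kpos kL sub cdep] by blast
  define ct where "ct = (\<lambda>j. if j \<in> C then - e0 j else if j \<in> I' then c j else 0)"
  note CE = circ_ext[OF finI sub CI I'I disj circC kpos x0 circc dep ct_def]
  have ctI': "ct j = c j" if "j \<in> I'" for j using that disj by (auto simp: ct_def)
  have "\<exists>j\<in>I. ct j \<noteq> 0" using cnz ctI' I'I by force
  then have cards: "card {j\<in>I. ct j > 0} \<le> 1 \<or> card {j\<in>I. ct j < 0} \<le> 1"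
    using sp CE unfolding SP_def by blast
  have "{j\<in>I'. c j > 0} \<subseteq> {j\<in>I. ct j > 0}" "{j\<in>I'. c j < 0} \<subseteq> {j\<in>I. ct j < 0}"
    using ctI' I'I by auto
  then have "card {j\<in>I'. c j > 0} \<le> card {j\<in>I. ct j > 0}" "card {j\<in>I'. c j < 0} \<le> card {j\<in>I. ct j < 0}"
    using finI by (auto intro!: card_mono)
  then show "card {j\<in>I'. c j > 0} \<le> 1 \<or> card {j\<in>I'. c j < 0} \<le> 1" using cards by linarith
qed

definition DEC :: "('i \<Rightarrow> 'v::real_vector) \<Rightarrow> 'v set \<Rightarrow> 'i set \<Rightarrow> nat \<Rightarrow> (nat \<Rightarrow> 'i set) \<Rightarrow> bool" where
  "DEC f L I k Z \<longleftrightarrow> (\<forall>i<k. Z i \<subseteq> I \<and> PC f L (Z i)) \<and> (\<forall>i<k. \<forall>j<k. i \<noteq> j \<longrightarrow> Z i \<inter> Z j = {}) \<and>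
     (\<forall>v. (\<forall>i<k. v i \<in> spanF f (Z i)) \<and> (\<Sum>i<k. v i) \<in> L \<longrightarrow> (\<forall>i<k. v i \<in> L)) \<and>
     (\<forall>x\<in>spanF f I. \<exists>v. (\<forall>i<k. v i \<in> spanF f (Z i)) \<and> x - (\<Sum>i<k. v i) \<in> L)"

lemma spanF_elem: assumes "finite I" "i \<in> I" shows "f i \<in> spanF f I"
proof -
  have "(\<Sum>w\<in>I. (if w = i then 1 else 0) *\<^sub>R f w) = (\<Sum>w\<in>I. if w = i then f w else 0)"
    by (rule sum.cong) auto
  also have "\<dots> = f i" using assms by (simp add: sum.delta')
  finally show ?thesis unfolding spanF_def
    by (intro range_eqI[where x="\<lambda>w. if w = i then 1 else 0"]) simp
qed

lemma spanF_sub: "subspace L \<Longrightarrow> (\<forall>j\<in>A. f j \<in> L) \<Longrightarrow> (\<Sum>j\<in>A. b j *\<^sub>R f j) \<in> L"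
  by (intro subspace_sum subspace_scale) auto

lemma CL:
  fixes f :: "'i \<Rightarrow> 'v::real_vector"
  shows "finite I \<Longrightarrow> subspace L \<Longrightarrow> (\<forall>i\<in>I. f i \<notin> L) \<Longrightarrow> TC f L I \<Longrightarrow> SP f L I \<Longrightarrow> \<exists>k Z. DEC f L I k Z"
proof (induction "card I" arbitrary: I L rule: less_induct)
  case less
  note finI = less.prems(1) and sub = less.prems(2) and nz = less.prems(3) and tc = less.prems(4) and sp = less.prems(5)
  show ?case
  proof (cases "I = {}")
    case True
    have "DEC f L I 0 Z" for Z
      unfolding DEC_def spanF_def using True sub by (auto simp: subspace_0)
    then show ?thesis by blast
  next
    case False
    obtain J where JI: "J \<subseteq> I" and tcJ: "TC f L J" and spJ: "\<forall>x\<in>spanF f I. \<exists>y\<in>spanF f J. x - y \<in> L"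
      and minJ: "\<forall>c\<in>J. \<not>(\<exists>a. (\<forall>j\<in>J-{c}. a j \<ge> 0) \<and> f c - (\<Sum>j\<in>J-{c}. a j *\<^sub>R f j) \<in> L)"
      using exists_minimal_J[OF finI sub tc] by blast
    have finJ: "finite J" using JI finI finite_subset by blast
    have Jne: "J \<noteq> {}"
    proof
      assume "J = {}"
      obtain i where i: "i \<in> I" using False by blast
      then obtain y where "y \<in> spanF f J" "f i - y \<in> L" using spJ spanF_elem[OF finI i] by blast
      then have "f i \<in> L" using \<open>J = {}\<close> by (simp add: spanF_def)
      then show False using nz i by blast
    qed
    obtain C where CJ: "C \<subseteq> J" and PCC: "PC f L C" using exists_PC[OF finJ sub Jne tcJ] by blast
    obtain kap where finC: "finite C" and Cne: "C \<noteq> {}" and kpos: "\<forall>z\<in>C. kap z > 0"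
      and kL: "(\<Sum>z\<in>C. kap z *\<^sub>R f z) \<in> L"
      and circC: "\<forall>e. (\<Sum>z\<in>C. e z *\<^sub>R f z) \<in> L \<longrightarrow> (\<exists>s. \<forall>z\<in>C. e z = s * kap z)"
      using PCC unfolding PC_def by blast
    define L' where "L' = Lext f L C"
    define I' where "I' = {i\<in>J-C. f i \<notin> L'}"
    have subL': "subspace L'" unfolding L'_def by (rule Lext_subspace[OF sub])
    have LL': "L \<subseteq> L'" unfolding L'_def using Lext_sup[OF sub] by blast
    have CL': "f z \<in> L'" if "z \<in> C" for z unfolding L'_def using Lext_elem[OF sub finC that] .
    have I'I: "I' \<subseteq> I" using I'_def JI by auto
    have finI': "finite I'" using I'I finI finite_subset by blast
    have disj: "I' \<inter> C = {}" using I'_def by auto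
    have "card I' < card I"
    proof -
      obtain z where z: "z \<in> C" using Cne by blast
      then have "z \<in> I" "z \<notin> I'" using CJ JI disj by auto
      then have "I' \<subset> I" using I'I by blast
      then show ?thesis using finI psubset_card_mono by blast
    qed
    have nz': "\<forall>i\<in>I'. f i \<notin> L'" using I'_def by blast
    have outI': "f j \<in> L'" if "j \<in> J - I'" for j using that CL' by (auto simp: I'_def)
    have sumJ: "(\<Sum>j\<in>J. b j *\<^sub>R f j) = (\<Sum>j\<in>I'. b j *\<^sub>R f j) + (\<Sum>j\<in>J-I'. b j *\<^sub>R f j)" for b
      using sum.subset_diff[of I' J "\<lambda>j. b j *\<^sub>R f j"] finJ I'_def by auto
    have restL': "(\<Sum>j\<in>J-I'. b j *\<^sub>R f j) \<in> L'" for b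
      by (intro spanF_sub[OF subL'] ballI outI')
    have tc': "TC f L' I'"
      unfolding TC_def
    proof
      fix i assume i: "i \<in> I'"
      then have "i \<in> J" using I'_def by auto
      then obtain c where c: "\<forall>j\<in>J. c j \<ge> 0" "c i > 0" "(\<Sum>j\<in>J. c j *\<^sub>R f j) \<in> L"
        using tcJ unfolding TC_def by blast
      have "(\<Sum>j\<in>I'. c j *\<^sub>R f j) = (\<Sum>j\<in>J. c j *\<^sub>R f j) - (\<Sum>j\<in>J-I'. c j *\<^sub>R f j)"
        using sumJ[of c] by simp
      also have "\<dots> \<in> L'" using subspace_diff[OF subL' subsetD[OF LL' c(3)] restL'] .
      finally show "\<exists>c. (\<forall>j\<in>I'. 0 \<le> c j) \<and> 0 < c i \<and> (\<Sum>j\<in>I'. c j *\<^sub>R f j) \<in> L'"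
        using c I'_def by blast
    qed
    have sp': "SP f L' I'"
      unfolding L'_def
      by (rule SP_contract[OF finI sub JI CJ finC Cne kpos kL circC _ sp]) (simp add: I'_def L'_def)
    obtain k' Z' where D': "DEC f L' I' k' Z'"
      using less.hyps[OF \<open>card I' < card I\<close> finI' subL' nz' tc' sp'] by blast
    have Z'I': "\<forall>i<k'. Z' i \<subseteq> I'" and PZ': "\<forall>i<k'. PC f L' (Z' i)"
      and disZ': "\<forall>i<k'. \<forall>j<k'. i \<noteq> j \<longrightarrow> Z' i \<inter> Z' j = {}"
      and indZ': "\<forall>v. (\<forall>i<k'. v i \<in> spanF f (Z' i)) \<and> (\<Sum>i<k'. v i) \<in> L' \<longrightarrow> (\<forall>i<k'. v i \<in> L')"
      and spZ': "\<forall>x\<in>spanF f I'. \<exists>v. (\<forall>i<k'. v i \<in> spanF f (Z' i)) \<and> x - (\<Sum>i<k'. v i) \<in> L'"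
      using D' unfolding DEC_def by auto
    have PZL: "PC f L (Z' i)" if "i < k'" for i
      using PC_lift[OF finI sub JI CJ finC Cne kpos kL circC _ minJ sp, of I' "Z' i"]
        Z'I' PZ' that by (simp add: I'_def L'_def)
    have Z'mem: "\<And>m x. m < k' \<Longrightarrow> x \<in> Z' m \<Longrightarrow> x \<in> I'" using Z'I' by blast
    define Z where "Z i = (if i = 0 then C else Z' (i - 1))" for i
    have "DEC f L I (Suc k') Z"
      unfolding DEC_def
    proof (intro conjI allI impI ballI)
      fix i assume "i < Suc k'"
      then show "Z i \<subseteq> I"
      proof (cases i)
        case 0 then show ?thesis using CJ JI by (simp add: Z_def)
      next
        case (Suc m)
        then have "m < k'" using \<open>i < Suc k'\<close> by simp
        then have "Z' m \<subseteq> I'" using Z'I' by blast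
        then show ?thesis using I'I Suc by (simp add: Z_def)
      qed
      show "PC f L (Z i)" using PCC PZL \<open>i < Suc k'\<close> by (cases i) (auto simp: Z_def)
    next
      fix i j assume "i < Suc k'" "j < Suc k'" "i \<noteq> j"
      then show "Z i \<inter> Z j = {}"
        using disZ' Z'mem disj by (cases i; cases j) (auto simp: Z_def; blast)+
    next
      fix v assume v: "(\<forall>i<Suc k'. v i \<in> spanF f (Z i)) \<and> (\<Sum>i<Suc k'. v i) \<in> L"
      define v' where "v' i = v (Suc i)" for i
      have v0: "v 0 \<in> spanF f C" using v by (auto simp: Z_def)
      have v0L': "v 0 \<in> L'"
      proof -
        obtain a where "v 0 = (\<Sum>z\<in>C. a z *\<^sub>R f z)" using v0 unfolding spanF_def by blast
        moreover have "(\<Sum>z\<in>C. a z *\<^sub>R f z) \<in> L'" by (intro spanF_sub[OF subL'] ballI CL')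
        ultimately show ?thesis by simp
      qed
      have sumv: "(\<Sum>i<Suc k'. v i) = v 0 + (\<Sum>i<k'. v' i)"
        unfolding sum.lessThan_Suc_shift by (simp add: v'_def)
      have v'sp: "\<forall>i<k'. v' i \<in> spanF f (Z' i)" using v by (auto simp: v'_def Z_def)
      have "(\<Sum>i<k'. v' i) = (\<Sum>i<Suc k'. v i) - v 0" using sumv by simp
      also have "\<dots> \<in> L'" using v v0L' LL' subL' by (blast intro: subspace_diff)
      finally have "(\<Sum>i<k'. v' i) \<in> L'" .
      then have v'L': "\<forall>i<k'. v' i \<in> L'" using indZ' v'sp by blast
      have v'L: "\<forall>i<k'. v' i \<in> L"
        using PC_span_in[OF sub LL'] PZL PZ' v'sp v'L' by blast
      have "(\<Sum>i<k'. v' i) \<in> L" using v'L sub by (auto intro: subspace_sum)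
      then have "v 0 \<in> L" using v sumv sub
        by (metis add_diff_cancel_right' subspace_diff)
      fix i assume "i < Suc k'"
      then show "v i \<in> L" using \<open>v 0 \<in> L\<close> v'L by (cases i) (auto simp: v'_def)
    next
      fix x assume "x \<in> spanF f I"
      then obtain y where y: "y \<in> spanF f J" "x - y \<in> L" using spJ by blast
      then obtain b where b: "y = (\<Sum>j\<in>J. b j *\<^sub>R f j)" unfolding spanF_def by blast
      have "(\<Sum>j\<in>I'. b j *\<^sub>R f j) \<in> spanF f I'" unfolding spanF_def by blast
      then obtain v' where v': "\<forall>i<k'. v' i \<in> spanF f (Z' i)" "(\<Sum>j\<in>I'. b j *\<^sub>R f j) - (\<Sum>i<k'. v' i) \<in> L'"
        using spZ' by blast
      have "x - (\<Sum>i<k'. v' i) = (x - y) + ((\<Sum>j\<in>I'. b j *\<^sub>R f j) - (\<Sum>i<k'. v' i)) + (\<Sum>j\<in>J-I'. b j *\<^sub>R f j)"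
        using b sumJ[of b] by (simp add: algebra_simps)
      also have "\<dots> \<in> L'" using y(2) LL' v'(2) restL' subL' by (blast intro: subspace_add)
      finally obtain l e where l: "l \<in> L" and le: "x - (\<Sum>i<k'. v' i) = l + (\<Sum>z\<in>C. e z *\<^sub>R f z)"
        unfolding L'_def Lext_def by blast
      define v where "v i = (if i = 0 then (\<Sum>z\<in>C. e z *\<^sub>R f z) else v' (i - 1))" for i
      have "\<forall>i<Suc k'. v i \<in> spanF f (Z i)"
      proof (intro allI impI)
        fix i assume "i < Suc k'"
        then show "v i \<in> spanF f (Z i)" using v' by (cases i) (auto simp: v_def Z_def spanF_def)
      qed
      moreover have "(\<Sum>i<Suc k'. v i) = (\<Sum>z\<in>C. e z *\<^sub>R f z) + (\<Sum>i<k'. v' i)"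
        unfolding sum.lessThan_Suc_shift by (simp add: v_def)
      then have "x - (\<Sum>i<Suc k'. v i) = l" using le by (simp add: algebra_simps)
      ultimately show "\<exists>v. (\<forall>i<Suc k'. v i \<in> spanF f (Z i)) \<and> x - (\<Sum>i<Suc k'. v i) \<in> L"
        using l by metis
    qed
    then show ?thesis by blast
  qed
qed


lemma supp_val_eq:
  assumes "\<forall>x\<in>S. u \<bullet> x \<le> b" "p \<in> S" "u \<bullet> p = b"
  shows "supp_val S u = b"
  unfolding supp_val_def using assms by (intro cSup_eq_maximum) auto

lemma supp_val_upper:
  assumes "bounded S" "x \<in> S"
  shows "u \<bullet> x \<le> supp_val S u"
proof -
  obtain B where B: "\<forall>y\<in>S. norm y \<le> B" using assms(1) bounded_iff by blast
  have "u \<bullet> y \<le> norm u * B" if "y \<in> S" for y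
    using B that norm_cauchy_schwarz[of u y] mult_left_mono[of "norm y" B "norm u"]
    by (smt (verit) norm_ge_zero)
  then have "bdd_above ((\<lambda>y. u \<bullet> y) ` S)" unfolding bdd_above_def by blast
  then show ?thesis unfolding supp_val_def using assms(2) by (rule cSUP_upper[rotated])
qed

lemma normal_unique:
  fixes S :: "'a::euclidean_space set"
  assumes full: "aff_dim S = int DIM('a)" and fac: "F facet_of S"
    and nu: "norm u = 1" and nv: "norm v = 1"
    and Fu: "F = S \<inter> {x. u \<bullet> x = al}" and Fv: "F = S \<inter> {x. v \<bullet> x = be}"
    and Su: "\<forall>x\<in>S. u \<bullet> x \<le> al" and Sv: "\<forall>x\<in>S. v \<bullet> x \<le> be"
  shows "u = v"
proof -
  have u0: "u \<noteq> 0" and v0: "v \<noteq> 0" using nu nv by auto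
  have Fne: "F \<noteq> {}" and dF: "aff_dim F = int DIM('a) - 1"
    using fac full unfolding facet_of_def by auto
  have hu: "affine hull F = {x. u \<bullet> x = al}"
  proof (rule affine_dim_equal)
    show "affine (affine hull F)" by simp
    show "affine {x. u \<bullet> x = al}" by (rule affine_hyperplane)
    show "affine hull F \<noteq> {}" using Fne by simp
    show "affine hull F \<subseteq> {x. u \<bullet> x = al}" using Fu by (intro hull_minimal) (auto simp: affine_hyperplane)
    show "aff_dim (affine hull F) = aff_dim {x. u \<bullet> x = al}" using dF u0 by simp
  qed
  have hv: "affine hull F = {x. v \<bullet> x = be}"
  proof (rule affine_dim_equal)
    show "affine (affine hull F)" by simp
    show "affine {x. v \<bullet> x = be}" by (rule affine_hyperplane)
    show "affine hull F \<noteq> {}" using Fne by simp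
    show "affine hull F \<subseteq> {x. v \<bullet> x = be}" using Fv by (intro hull_minimal) (auto simp: affine_hyperplane)
    show "aff_dim (affine hull F) = aff_dim {x. v \<bullet> x = be}" using dF v0 by simp
  qed
  obtain p where pF: "p \<in> F" using Fne by blast
  have pu: "u \<bullet> p = al" and pv: "v \<bullet> p = be" and pS: "p \<in> S" using pF Fu Fv by auto
  have uu: "u \<bullet> u = 1" using nu by (simp add: norm_eq_1)
  have vv: "v \<bullet> v = 1" using nv by (simp add: norm_eq_1)
  define w where "w = v - (v \<bullet> u) *\<^sub>R u"
  have uw: "u \<bullet> w = 0" using uu by (simp add: w_def inner_diff_right inner_commute)
  have "p + w \<in> {x. u \<bullet> x = al}" using pu uw by (simp add: inner_add_right)
  then have "p + w \<in> {x. v \<bullet> x = be}" using hu hv by simp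
  then have vw: "v \<bullet> w = 0" using pv by (simp add: inner_add_right)
  have "w \<bullet> w = v \<bullet> w - (v \<bullet> u) * (u \<bullet> w)" by (simp add: w_def inner_diff_left)
  then have "w \<bullet> w = 0" using vw uw by simp
  then have w0: "w = 0" by simp
  then have veq: "v = (v \<bullet> u) *\<^sub>R u" by (simp add: w_def)
  have "(v \<bullet> u) * (v \<bullet> u) = 1"
  proof -
    have "v \<bullet> v = (v \<bullet> u) * (v \<bullet> u) * (u \<bullet> u)"
      by (subst (1 2) veq) (simp add: algebra_simps)
    then show ?thesis using uu vv by simp
  qed
  then have "v \<bullet> u = 1 \<or> v \<bullet> u = -1"
    by (metis mult_cancel_left1 square_eq_1_iff) 
  then show ?thesis
  proof
    assume "v \<bullet> u = 1" then show ?thesis using veq by simp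
  next
    assume m: "v \<bullet> u = -1"
    then have vneg: "v = - u" using veq by simp
    then have "be = - al" using pu pv by simp
    then have "S \<subseteq> {x. u \<bullet> x = al}" using Su Sv vneg by (force simp: inner_minus_left)
    then have "aff_dim S \<le> aff_dim {x. u \<bullet> x = al}" by (rule aff_dim_subset)
    then show ?thesis using full u0 by simp
  qed
qed

lemma P_structure:
  fixes P :: "'a::euclidean_space set"
  assumes poly: "polytope P" and full: "aff_dim P = int DIM('a)"
  shows "finite (facet_normals P)" "\<forall>u\<in>facet_normals P. norm u = 1"
    "P = {x. \<forall>u\<in>facet_normals P. u \<bullet> x \<le> supp_val P u}"
proof -
  have ph: "polyhedron P" using poly by (rule polytope_imp_polyhedron)
  have bdd: "bounded P" using poly polytope_eq_bounded_polyhedron by blast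
  have ahP: "affine hull P = UNIV" using full aff_dim_eq_full by blast
  obtain F where finF: "finite F" and seq: "P = affine hull P \<inter> \<Inter>F"
    and faces: "\<And>h. h \<in> F \<Longrightarrow> \<exists>a b. a \<noteq> 0 \<and> h = {x. a \<bullet> x \<le> b}"
    and min: "\<And>F'. F' \<subset> F \<Longrightarrow> P \<subset> (affine hull P) \<inter> \<Inter>F'"
    using ph by (simp add: polyhedron_Int_affine_minimal) meson
  then obtain a b where ab: "\<And>h. h \<in> F \<Longrightarrow> a h \<noteq> 0 \<and> h = {x. a h \<bullet> x \<le> b h}"
    by metis
  note expl = facet_of_polyhedron_explicit[OF finF seq ab min]
  define nrm where "nrm h = (1 / norm (a h)) *\<^sub>R a h" for h
  define bt where "bt h = b h / norm (a h)" for h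
  have nrm1: "norm (nrm h) = 1" if "h \<in> F" for h using ab[OF that] by (simp add: nrm_def)
  have hs_le: "{x. a h \<bullet> x \<le> b h} = {x. nrm h \<bullet> x \<le> bt h}" if "h \<in> F" for h
    using ab[OF that] by (auto simp: nrm_def bt_def field_simps)
  have hs_eq: "{x. a h \<bullet> x = b h} = {x. nrm h \<bullet> x = bt h}" if "h \<in> F" for h
    using ab[OF that] by (auto simp: nrm_def bt_def field_simps)
  have Psub: "P \<subseteq> h" if "h \<in> F" for h using seq that by blast
  have supp_nrm: "supp_val P (nrm h) = bt h" and nrm_in: "nrm h \<in> facet_normals P" if hF: "h \<in> F" for h
  proof -
    have fac: "(P \<inter> {x. a h \<bullet> x = b h}) facet_of P" using expl hF by blast
    then obtain p where "p \<in> P \<inter> {x. a h \<bullet> x = b h}" unfolding facet_of_def by blast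
    then have p: "p \<in> P" "nrm h \<bullet> p = bt h" using hs_eq[OF hF] by auto
    have "\<forall>x\<in>P. nrm h \<bullet> x \<le> bt h" using Psub[OF hF] ab[OF hF] hs_le[OF hF] by auto
    then show sv: "supp_val P (nrm h) = bt h" using supp_val_eq p by blast
    show "nrm h \<in> facet_normals P"
      unfolding facet_normals_def using fac hs_eq[OF hF] sv nrm1[OF hF] by auto
  qed
  have X_eq: "facet_normals P = nrm ` F"
  proof
    show "nrm ` F \<subseteq> facet_normals P" using nrm_in by blast
    show "facet_normals P \<subseteq> nrm ` F"
    proof
      fix u assume "u \<in> facet_normals P"
      then obtain Fa where u1: "norm u = 1" and fa: "Fa facet_of P" and Fa: "Fa = P \<inter> {x. u \<bullet> x = supp_val P u}"
        unfolding facet_normals_def by blast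
      obtain h where hF: "h \<in> F" and Fh: "Fa = P \<inter> {x. a h \<bullet> x = b h}" using expl fa by blast
      have "u = nrm h"
      proof (rule normal_unique[OF full fa u1 nrm1[OF hF] Fa])
        show "Fa = P \<inter> {x. nrm h \<bullet> x = bt h}" using Fh hs_eq[OF hF] by simp
        show "\<forall>x\<in>P. u \<bullet> x \<le> supp_val P u" using supp_val_upper[OF bdd] by blast
        show "\<forall>x\<in>P. nrm h \<bullet> x \<le> bt h" using Psub[OF hF] ab[OF hF] hs_le[OF hF] by auto
      qed
      then show "u \<in> nrm ` F" using hF by blast
    qed
  qed
  show "finite (facet_normals P)" using X_eq finF by simp
  show "\<forall>u\<in>facet_normals P. norm u = 1" using X_eq nrm1 by auto
  show "P = {x. \<forall>u\<in>facet_normals P. u \<bullet> x \<le> supp_val P u}"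
  proof
    show "P \<subseteq> {x. \<forall>u\<in>facet_normals P. u \<bullet> x \<le> supp_val P u}"
      using supp_val_upper[OF bdd] by blast
    show "{x. \<forall>u\<in>facet_normals P. u \<bullet> x \<le> supp_val P u} \<subseteq> P"
    proof
      fix x assume x: "x \<in> {x. \<forall>u\<in>facet_normals P. u \<bullet> x \<le> supp_val P u}"
      have "x \<in> h" if hF: "h \<in> F" for h
      proof -
        have "nrm h \<bullet> x \<le> bt h" using x nrm_in[OF hF] supp_nrm[OF hF] by auto
        then show ?thesis using ab[OF hF] hs_le[OF hF] by auto
      qed
      then show "x \<in> P" using seq ahP by blast
    qed
  qed
qed

lemma cone_full:
  fixes X :: "'a::euclidean_space set"
  assumes finX: "finite X" and bdd: "bounded P" and Pne: "P \<noteq> {}"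
    and Peq: "P = {x. \<forall>u\<in>X. u \<bullet> x \<le> g u}"
  shows "\<exists>c. (\<forall>u\<in>X. c u \<ge> 0) \<and> v = (\<Sum>u\<in>X. c u *\<^sub>R u)"
proof -
  define K where "K = {y. \<exists>c. (\<forall>u\<in>X. c u \<ge> 0) \<and> y = (\<Sum>u\<in>X. c u *\<^sub>R u)}"
  have XK: "X \<subseteq> K"
  proof
    fix x assume x: "x \<in> X"
    have "(\<Sum>w\<in>X. (if w = x then 1 else 0) *\<^sub>R w) = (\<Sum>w\<in>X. if w = x then w else 0)"
      by (rule sum.cong) auto
    also have "\<dots> = x" using finX x by (simp add: sum.delta')
    finally show "x \<in> K" unfolding K_def
      by (intro CollectI exI[of _ "\<lambda>w. if w = x then 1 else 0"]) auto
  qed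
  have ccK: "convex_cone K"
    unfolding convex_cone_def
  proof (intro conjI)
    have "(0::'a) \<in> K" unfolding K_def by (intro CollectI exI[of _ "\<lambda>_. 0"]) simp
    then show "K \<noteq> {}" by blast
    show "convex K" unfolding convex_def
    proof (intro ballI allI impI)
      fix x y :: 'a and s t :: real assume xK: "x \<in> K" and yK: "y \<in> K" and st: "0 \<le> s" "0 \<le> t" "s + t = 1"
      obtain c1 where c1: "\<forall>u\<in>X. c1 u \<ge> 0" "x = (\<Sum>u\<in>X. c1 u *\<^sub>R u)"
        using xK unfolding K_def by blast
      obtain c2 where c2: "\<forall>u\<in>X. c2 u \<ge> 0" "y = (\<Sum>u\<in>X. c2 u *\<^sub>R u)"
        using yK unfolding K_def by blast
      note c = c1 c2
      have "s *\<^sub>R x + t *\<^sub>R y = (\<Sum>u\<in>X. (s * c1 u + t * c2 u) *\<^sub>R u)"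
      proof -
        have "s *\<^sub>R x + t *\<^sub>R y = (\<Sum>u\<in>X. s *\<^sub>R (c1 u *\<^sub>R u)) + (\<Sum>u\<in>X. t *\<^sub>R (c2 u *\<^sub>R u))"
          by (simp only: c1(2) c2(2) scaleR_sum_right)
        also have "\<dots> = (\<Sum>u\<in>X. (s * c1 u + t * c2 u) *\<^sub>R u)"
          by (simp add: scaleR_add_left sum.distrib)
        finally show ?thesis .
      qed
      moreover have "\<forall>u\<in>X. s * c1 u + t * c2 u \<ge> 0" using c st by simp
      ultimately show "s *\<^sub>R x + t *\<^sub>R y \<in> K" unfolding K_def
        by (intro CollectI exI[of _ "\<lambda>u. s * c1 u + t * c2 u"]) simp
    qed
    show "conic K" unfolding conic_def
    proof (intro allI impI)
      fix x and t :: real assume "x \<in> K" "0 \<le> t"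
      then obtain c1 where c: "\<forall>u\<in>X. c1 u \<ge> 0" "x = (\<Sum>u\<in>X. c1 u *\<^sub>R u)" unfolding K_def by blast
      have "t *\<^sub>R x = (\<Sum>u\<in>X. (t * c1 u) *\<^sub>R u)" by (simp add: c scaleR_sum_right)
      moreover have "\<forall>u\<in>X. t * c1 u \<ge> 0" using c \<open>0 \<le> t\<close> by simp
      ultimately show "t *\<^sub>R x \<in> K" unfolding K_def
        by (intro CollectI exI[of _ "\<lambda>u. t * c1 u"]) simp
    qed
  qed
  have hullK: "convex_cone hull X \<subseteq> K" using XK ccK by (rule hull_minimal)
  have "v \<in> convex_cone hull X"
  proof (rule ccontr)
    assume nv: "v \<notin> convex_cone hull X"
    obtain a b where ab: "a \<bullet> v < b" "\<forall>x\<in>convex_cone hull X. b < a \<bullet> x"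
      using separating_hyperplane_closed_point[OF convex_convex_cone_hull closed_convex_cone_hull[OF finX] nv] by blast
    have b0: "b < 0" using ab(2) convex_cone_hull_contains_0 by fastforce
    have ax: "a \<bullet> x \<ge> 0" if x: "x \<in> X" for x
    proof (rule ccontr)
      assume "\<not> a \<bullet> x \<ge> 0"
      then have neg: "a \<bullet> x < 0" by simp
      define t where "t = b / (a \<bullet> x)"
      have "t \<ge> 0" unfolding t_def using neg b0 by (intro divide_nonpos_neg) auto
      have xh: "x \<in> convex_cone hull X" by (rule hull_inc[OF x])
      have "t *\<^sub>R x \<in> convex_cone hull X"
        using conic_convex_cone_hull[of X] xh \<open>t \<ge> 0\<close> unfolding conic_def by blast
      then have "b < a \<bullet> (t *\<^sub>R x)" by (rule bspec[OF ab(2)])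
      moreover have "a \<bullet> (t *\<^sub>R x) = t * (a \<bullet> x)" by simp
      moreover have "t * (a \<bullet> x) = b" using neg unfolding t_def by simp
      ultimately show False by simp
    qed
    have a0: "a \<noteq> 0" using ab(1) b0 by auto
    obtain p where pP: "p \<in> P" using Pne by blast
    obtain B where B: "\<forall>x\<in>P. norm x \<le> B" using bdd bounded_iff by blast
    define t where "t = (B + norm p + 1) / norm a"
    have "norm p \<le> B" using B pP by blast
    then have B0: "B \<ge> 0" using norm_ge_zero[of p] by linarith
    have tpos: "t \<ge> 0" using B0 by (simp add: t_def)
    have "p - t *\<^sub>R a \<in> P"
    proof -
      have "u \<bullet> (p - t *\<^sub>R a) \<le> g u" if "u \<in> X" for u
      proof -
        have "u \<bullet> p \<le> g u" using pP that Peq by blast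
        moreover have "t * (a \<bullet> u) \<ge> 0" using ax[OF that] tpos by simp
        ultimately show ?thesis by (simp add: inner_diff_right inner_commute)
      qed
      then show ?thesis using Peq by blast
    qed
    then have le: "norm (p - t *\<^sub>R a) \<le> B" using B by blast
    have "norm (t *\<^sub>R a) = B + norm p + 1" using a0 tpos B0 by (simp add: t_def)
    moreover have "norm (t *\<^sub>R a) \<le> norm (p - t *\<^sub>R a) + norm p"
    proof -
      have "t *\<^sub>R a = p - (p - t *\<^sub>R a)" by simp
      then have "norm (t *\<^sub>R a) = norm (p - (p - t *\<^sub>R a))" by simp
      also have "\<dots> \<le> norm p + norm (p - t *\<^sub>R a)" by (rule norm_triangle_ineq4)
      finally show ?thesis by simp
    qed
    ultimately show False using le by simp
  qed
  then show ?thesis using hullK unfolding K_def by blast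
qed

lemma inner_le_of_cone:
  fixes X :: "'a::euclidean_space set"
  assumes "\<forall>u\<in>X. c u \<ge> 0" "\<forall>u\<in>X. u \<bullet> x \<le> h u"
  shows "(\<Sum>u\<in>X. c u *\<^sub>R u) \<bullet> x \<le> (\<Sum>u\<in>X. c u * h u)"
proof -
  have "(\<Sum>u\<in>X. c u *\<^sub>R u) \<bullet> x = (\<Sum>u\<in>X. c u * (u \<bullet> x))" by (simp add: inner_sum_left)
  also have "\<dots> \<le> (\<Sum>u\<in>X. c u * h u)" using assms by (intro sum_mono mult_left_mono) auto
  finally show ?thesis .
qed

lemma Q_valid:
  fixes X :: "'a::euclidean_space set"
  assumes finX: "finite X" and unit: "\<forall>u\<in>X. norm u = 1"
    and cone: "\<And>v. \<exists>c. (\<forall>u\<in>X. c u \<ge> 0) \<and> v = (\<Sum>u\<in>X. c u *\<^sub>R u)"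
    and wit: "\<And>u. u \<in> X \<Longrightarrow> u \<bullet> p u = h u \<and> (\<forall>v\<in>X. v \<noteq> u \<longrightarrow> v \<bullet> p u < h v)"
    and Qdef: "Q = {x. \<forall>u\<in>X. u \<bullet> x \<le> h u}"
  shows "polytope Q" "facet_normals Q = X" "\<forall>u\<in>X. supp_val Q u = h u"
proof -
  have other: "\<exists>v\<in>X. v \<noteq> u" if uX: "u \<in> X" for u
  proof (rule ccontr)
    assume "\<not> (\<exists>v\<in>X. v \<noteq> u)"
    then have Xu: "X = {u}" using uX by blast
    obtain c where "- u = (\<Sum>w\<in>X. c w *\<^sub>R w)" "\<forall>w\<in>X. c w \<ge> 0" using cone by blast
    then have "- u = c u *\<^sub>R u" "c u \<ge> 0" using Xu by auto
    then have "(1 + c u) *\<^sub>R u = u + - u" by (simp add: algebra_simps)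
    then have "(1 + c u) *\<^sub>R u = 0" by simp
    moreover have "u \<noteq> 0" using unit uX by auto
    ultimately show False using \<open>c u \<ge> 0\<close> by simp
  qed
  have Xne: "X \<noteq> {}"
  proof -
    obtain b :: 'a where "b \<in> Basis" using nonempty_Basis by blast
    then have "b \<noteq> 0" by auto
    obtain c where "b = (\<Sum>w\<in>X. c w *\<^sub>R w)" using cone by blast
    then show ?thesis using \<open>b \<noteq> 0\<close> by auto
  qed
  have pQ: "p u \<in> Q" if "u \<in> X" for u using wit[OF that] Qdef by (force simp: less_imp_le)
  have ph: "polyhedron Q"
    unfolding polyhedron_def
  proof (intro exI conjI)
    show "finite ((\<lambda>u. {x. u \<bullet> x \<le> h u}) ` X)" using finX by simp
    show "Q = \<Inter> ((\<lambda>u. {x. u \<bullet> x \<le> h u}) ` X)" using Qdef by auto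
    show "\<forall>hs\<in>(\<lambda>u. {x. u \<bullet> x \<le> h u}) ` X. \<exists>a b. a \<noteq> 0 \<and> hs = {x. a \<bullet> x \<le> b}"
    proof
      fix hs assume "hs \<in> (\<lambda>u. {x. u \<bullet> x \<le> h u}) ` X"
      then obtain u where "u \<in> X" "hs = {x. u \<bullet> x \<le> h u}" by blast
      moreover have "u \<noteq> 0" using unit \<open>u \<in> X\<close> by auto
      ultimately show "\<exists>a b. a \<noteq> 0 \<and> hs = {x. a \<bullet> x \<le> b}" by blast
    qed
  qed
  have bdd: "bounded Q"
  proof -
    have "\<exists>M. \<forall>x\<in>Q. \<bar>x \<bullet> b\<bar> \<le> M" for b :: 'a
    proof -
      obtain c where c: "\<forall>u\<in>X. c u \<ge> 0" "b = (\<Sum>u\<in>X. c u *\<^sub>R u)" using cone by blast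
      obtain c' where c': "\<forall>u\<in>X. c' u \<ge> 0" "- b = (\<Sum>u\<in>X. c' u *\<^sub>R u)" using cone by blast
      have "\<bar>x \<bullet> b\<bar> \<le> max (\<Sum>u\<in>X. c u * h u) (\<Sum>u\<in>X. c' u * h u)" if "x \<in> Q" for x
      proof -
        have xh: "\<forall>u\<in>X. u \<bullet> x \<le> h u" using that Qdef by blast
        have "b \<bullet> x \<le> (\<Sum>u\<in>X. c u * h u)" using inner_le_of_cone[OF c(1) xh] c(2) by simp
        moreover have "(- b) \<bullet> x \<le> (\<Sum>u\<in>X. c' u * h u)" using inner_le_of_cone[OF c'(1) xh] c'(2) by simp
        ultimately show ?thesis by (auto simp: inner_commute)
      qed
      then show ?thesis by blast
    qed
    then obtain M where M: "\<And>b. \<forall>x\<in>Q. \<bar>x \<bullet> b\<bar> \<le> M b" by metis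
    have "norm x \<le> (\<Sum>b\<in>Basis. M b)" if "x \<in> Q" for x
    proof -
      have "norm x \<le> (\<Sum>b\<in>Basis. \<bar>x \<bullet> b\<bar>)" by (rule norm_le_l1)
      also have "\<dots> \<le> (\<Sum>b\<in>Basis. M b)" using M that by (intro sum_mono) blast
      finally show ?thesis .
    qed
    then show ?thesis unfolding bounded_iff by blast
  qed
  show poly: "polytope Q" using ph bdd polytope_eq_bounded_polyhedron by blast
  have cvx: "convex Q" using ph by (rule polyhedron_imp_convex)
  have supp: "supp_val Q u = h u" if "u \<in> X" for u
    using supp_val_eq[of Q u "h u" "p u"] pQ[OF that] wit[OF that] Qdef that by blast
  then show "\<forall>u\<in>X. supp_val Q u = h u" by blast
  define gap where "gap u = Min ((\<lambda>v. h v - v \<bullet> p u) ` (X - {u}))" for u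
  have gap: "gap u > 0" "\<forall>v\<in>X-{u}. gap u \<le> h v - v \<bullet> p u" if uX: "u \<in> X" for u
  proof -
    have ne: "X - {u} \<noteq> {}" using other[OF uX] by blast
    have fin: "finite (X - {u})" using finX by simp
    have "gap u \<in> (\<lambda>v. h v - v \<bullet> p u) ` (X - {u})" unfolding gap_def using fin ne by (intro Min_in) auto
    then show "gap u > 0" using wit[OF uX] by auto
    show "\<forall>v\<in>X-{u}. gap u \<le> h v - v \<bullet> p u" unfolding gap_def using fin by auto
  qed
  have inner_le: "v \<bullet> y \<le> norm y" if "v \<in> X" for v y
    using norm_cauchy_schwarz[of v y] unit that by simp
  have facet: "(Q \<inter> {x. u \<bullet> x = h u}) facet_of Q" and dimF: "aff_dim (Q \<inter> {x. u \<bullet> x = h u}) = int DIM('a) - 1"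
    if uX: "u \<in> X" for u
  proof -
    define Fu where "Fu = Q \<inter> {x. u \<bullet> x = h u}"
    have u0: "u \<noteq> 0" using unit uX by auto
    have face: "Fu face_of Q" unfolding Fu_def
      by (rule face_of_Int_supporting_hyperplane_le[OF cvx]) (use Qdef uX in blast)
    have Fne: "Fu \<noteq> {}" using pQ[OF uX] wit[OF uX] by (auto simp: Fu_def)
    obtain v where vX: "v \<in> X" "v \<noteq> u" using other[OF uX] by blast
    have "p v \<notin> Fu" using wit[OF vX(1)] vX uX by (auto simp: Fu_def)
    then have FQ: "Fu \<noteq> Q" using pQ[OF vX(1)] by blast
    have sub1: "ball (p u) (gap u) \<inter> {x. u \<bullet> x = h u} \<subseteq> Fu"
    proof
      fix x assume x: "x \<in> ball (p u) (gap u) \<inter> {x. u \<bullet> x = h u}"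
      have "w \<bullet> x \<le> h w" if wX: "w \<in> X" for w
      proof (cases "w = u")
        case True then show ?thesis using x by simp
      next
        case False
        have "w \<bullet> x = w \<bullet> p u + w \<bullet> (x - p u)" by (simp add: inner_diff_right)
        also have "\<dots> \<le> w \<bullet> p u + norm (x - p u)" using inner_le[OF wX] by simp
        also have "\<dots> < w \<bullet> p u + gap u" using x by (simp add: dist_norm norm_minus_commute)
        also have "\<dots> \<le> h w" using gap(2)[OF uX] wX False by force
        finally show ?thesis by simp
      qed
      then show "x \<in> Fu" using x Qdef by (auto simp: Fu_def)
    qed
    have "aff_dim (ball (p u) (gap u) \<inter> {x. u \<bullet> x = h u}) = aff_dim {x. u \<bullet> x = h u}"
    proof -
      have "{x. u \<bullet> x = h u} \<inter> ball (p u) (gap u) \<noteq> {}" using wit[OF uX] gap(1)[OF uX] by auto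
      then have "aff_dim ({x. u \<bullet> x = h u} \<inter> ball (p u) (gap u)) = aff_dim {x. u \<bullet> x = h u}"
        by (intro aff_dim_convex_Int_open) (auto simp: convex_hyperplane)
      then show ?thesis by (simp add: Int_commute)
    qed
    then have ge: "aff_dim Fu \<ge> int DIM('a) - 1" using aff_dim_subset[OF sub1] u0 by simp
    have "aff_dim Fu \<le> aff_dim {x. u \<bullet> x = h u}" by (rule aff_dim_subset) (auto simp: Fu_def)
    then have dF: "aff_dim Fu = int DIM('a) - 1" using ge u0 by simp
    then show "aff_dim (Q \<inter> {x. u \<bullet> x = h u}) = int DIM('a) - 1" by (simp add: Fu_def)
    have "aff_dim Fu < aff_dim Q" by (rule face_of_aff_dim_lt[OF cvx face FQ])
    then have "aff_dim Q = int DIM('a)" using dF aff_dim_le_DIM[of Q] by simp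
    then show "(Q \<inter> {x. u \<bullet> x = h u}) facet_of Q"
      unfolding facet_of_def using face Fne dF by (simp add: Fu_def)
  qed
  obtain u0 where u0X: "u0 \<in> X" using Xne by blast
  have fullQ: "aff_dim Q = int DIM('a)"
    using facet[OF u0X] dimF[OF u0X] unfolding facet_of_def by simp
  show "facet_normals Q = X"
  proof
    show "X \<subseteq> facet_normals Q"
    proof
      fix u assume uX: "u \<in> X"
      show "u \<in> facet_normals Q"
        unfolding facet_normals_def using unit uX facet[OF uX] supp[OF uX] by auto
    qed
  next
    show "facet_normals Q \<subseteq> X"
    proof
      fix u assume "u \<in> facet_normals Q"
      then obtain Fa where u1: "norm u = 1" and fa: "Fa facet_of Q" and Fa: "Fa = Q \<inter> {x. u \<bullet> x = supp_val Q u}"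
        unfolding facet_normals_def by blast
      define Fam where "Fam = (\<lambda>v. {x. v \<bullet> x \<le> h v}) ` X"
      define an where "an hs = (SOME v. v \<in> X \<and> hs = {x. v \<bullet> x \<le> h v})" for hs
      define bn where "bn hs = h (an hs)" for hs
      have anX: "an hs \<in> X \<and> hs = {x. an hs \<bullet> x \<le> h (an hs)}" if "hs \<in> Fam" for hs
      proof -
        have "\<exists>v. v \<in> X \<and> hs = {x. v \<bullet> x \<le> h v}" using that Fam_def by blast
        then show ?thesis unfolding an_def by (rule someI_ex)
      qed
      have ahQ: "affine hull Q = UNIV" using fullQ aff_dim_eq_full by blast
      have finF: "finite Fam" using finX Fam_def by simp
      have seq: "Q = affine hull Q \<inter> \<Inter>Fam" using Qdef ahQ by (auto simp: Fam_def)
      have faceq: "an hs \<noteq> 0 \<and> hs = {x. an hs \<bullet> x \<le> bn hs}" if "hs \<in> Fam" for hs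
        using anX[OF that] unit by (auto simp: bn_def)
      have psub: "Q \<subset> affine hull Q \<inter> \<Inter>F'" if F': "F' \<subset> Fam" for F'
      proof -
        obtain hs0 where hs0: "hs0 \<in> Fam" "hs0 \<notin> F'" using F' by blast
        then obtain w where wX: "w \<in> X" and hw: "hs0 = {x. w \<bullet> x \<le> h w}" unfolding Fam_def by blast
        define q where "q = p w + (gap w / 2) *\<^sub>R w"
        have ww: "w \<bullet> w = 1" using unit wX by (simp add: norm_eq_1)
        have "w \<bullet> q = h w + gap w / 2" using wit[OF wX] ww by (simp add: q_def inner_add_right)
        then have "\<not> w \<bullet> q \<le> h w" using gap(1)[OF wX] by simp
        then have "q \<notin> Q" using Qdef wX by blast
        moreover have "q \<in> \<Inter>F'"
        proof
          fix hs assume hs: "hs \<in> F'"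
          then obtain v where vX: "v \<in> X" and hv: "hs = {x. v \<bullet> x \<le> h v}" using F' unfolding Fam_def by blast
          have "v \<noteq> w" using hs hs0(2) hv hw by blast
          have "v \<bullet> q = v \<bullet> p w + (gap w / 2) * (v \<bullet> w)" by (simp add: q_def inner_add_right)
          also have "\<dots> \<le> v \<bullet> p w + gap w / 2"
          proof -
            have "v \<bullet> w \<le> 1" using inner_le[OF vX, of w] unit wX by simp
            then show ?thesis using gap(1)[OF wX] by (simp add: mult_left_le)
          qed
          also have "\<dots> < h v" using gap(1)[OF wX] gap(2)[OF wX] vX \<open>v \<noteq> w\<close> by force
          finally show "q \<in> hs" using hv by simp
        qed
        moreover have "Q \<subseteq> affine hull Q \<inter> \<Inter>F'" using seq F' by blast
        ultimately show ?thesis using ahQ by blast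
      qed
      obtain hs where hsF: "hs \<in> Fam" and Fh: "Fa = Q \<inter> {x. an hs \<bullet> x = bn hs}"
        using facet_of_polyhedron_explicit[OF finF seq faceq psub] fa by blast
      have vX: "an hs \<in> X" using anX[OF hsF] by blast
      have "u = an hs"
      proof (rule normal_unique[OF fullQ fa u1 _ Fa])
        show "norm (an hs) = 1" using unit vX by blast
        show "Fa = Q \<inter> {x. an hs \<bullet> x = h (an hs)}" using Fh by (simp add: bn_def)
        show "\<forall>x\<in>Q. u \<bullet> x \<le> supp_val Q u" using supp_val_upper[OF bdd] by blast
        show "\<forall>x\<in>Q. an hs \<bullet> x \<le> h (an hs)" using Qdef vX by blast
      qed
      then show "u \<in> X" using vX by simp
    qed
  qed
qed


lemma sgn_mul_self: "sgn (x::real) * x = \<bar>x\<bar>" by (simp add: sgn_if)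

lemma functional_repr:
  fixes g :: "'a::euclidean_space \<Rightarrow> real"
  assumes "linear g"
  shows "y \<bullet> (\<Sum>i\<in>Basis. g i *\<^sub>R i) = g y"
proof -
  have "g y = g (\<Sum>i\<in>Basis. (y \<bullet> i) *\<^sub>R i)" by (simp add: euclidean_representation)
  also have "\<dots> = (\<Sum>i\<in>Basis. (y \<bullet> i) * g i)" using assms by (simp add: linear_sum linear_scale)
  also have "\<dots> = y \<bullet> (\<Sum>i\<in>Basis. g i *\<^sub>R i)" by (simp add: inner_sum_right mult.commute)
  finally show ?thesis by simp
qed

lemma surj_circ:
  fixes X :: "'a::euclidean_space set"
  assumes finX: "finite X" and dep: "(\<Sum>u\<in>X. c u *\<^sub>R u) = 0" and u0: "u0 \<in> X" "c u0 \<noteq> 0"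
    and circ: "\<forall>e. (\<forall>j\<in>X. c j = 0 \<longrightarrow> e j = 0) \<and> (\<Sum>j\<in>X. e j *\<^sub>R j) = 0 \<longrightarrow> (\<exists>s. \<forall>j\<in>X. e j = s * c j)"
    and tsum: "(\<Sum>u\<in>X. c u * t u) = 0"
  shows "\<exists>x. \<forall>u\<in>X. c u \<noteq> 0 \<longrightarrow> u \<bullet> x = t u"
proof -
  define B where "B = {u\<in>X. c u \<noteq> 0} - {u0}"
  have indB: "independent B"
  proof
    assume "dependent B"
    then obtain T a where T: "finite T" "T \<subseteq> B" "(\<Sum>v\<in>T. a v *\<^sub>R v) = 0" and nz: "\<exists>v\<in>T. a v \<noteq> 0"
      unfolding dependent_explicit by blast
    define e where "e u = (if u \<in> T then a u else 0)" for u
    have TX: "T \<subseteq> X" using T(2) B_def by auto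
    have "(\<Sum>j\<in>X. e j *\<^sub>R j) = (\<Sum>j\<in>T. e j *\<^sub>R j)"
      by (rule sum.mono_neutral_right) (use finX TX in \<open>auto simp: e_def\<close>)
    also have "\<dots> = (\<Sum>j\<in>T. a j *\<^sub>R j)" by (rule sum.cong) (auto simp: e_def)
    finally have esum: "(\<Sum>j\<in>X. e j *\<^sub>R j) = 0" using T(3) by simp
    have "\<forall>j\<in>X. c j = 0 \<longrightarrow> e j = 0" using T(2) by (auto simp: e_def B_def)
    then obtain s where s: "\<forall>j\<in>X. e j = s * c j" using circ esum by blast
    have "e u0 = 0" using T(2) by (auto simp: e_def B_def)
    then have "s = 0" using s u0 by auto
    then have "\<forall>v\<in>T. a v = 0" using s TX by (metis (no_types, lifting) e_def mult_zero_left subsetD)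
    then show False using nz by blast
  qed
  obtain g where g: "linear g" "\<forall>x\<in>B. g x = t x"
    using linear_independent_extend[OF indB] by blast
  define x where "x = (\<Sum>i\<in>Basis. g i *\<^sub>R i)"
  have gx: "y \<bullet> x = g y" for y unfolding x_def by (rule functional_repr[OF g(1)])
  have onB: "u \<bullet> x = t u" if "u \<in> X" "c u \<noteq> 0" "u \<noteq> u0" for u
    using that g(2) gx by (auto simp: B_def)
  have "(\<Sum>u\<in>X. c u * (u \<bullet> x)) = (\<Sum>u\<in>X. c u *\<^sub>R u) \<bullet> x" by (simp add: inner_sum_left)
  then have s1: "(\<Sum>u\<in>X. c u * (u \<bullet> x)) = 0" using dep by simp
  have rest: "(\<Sum>u\<in>X-{u0}. c u * (u \<bullet> x)) = (\<Sum>u\<in>X-{u0}. c u * t u)"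
    by (rule sum.cong) (use onB in auto)
  have "c u0 * (u0 \<bullet> x) + (\<Sum>u\<in>X-{u0}. c u * (u \<bullet> x)) = 0"
    using s1 sum.remove[OF finX u0(1), of "\<lambda>u. c u * (u \<bullet> x)"] by simp
  moreover have "c u0 * t u0 + (\<Sum>u\<in>X-{u0}. c u * t u) = 0"
    using tsum sum.remove[OF finX u0(1), of "\<lambda>u. c u * t u"] by simp
  ultimately have "c u0 * (u0 \<bullet> x) = c u0 * t u0" using rest by linarith
  then have "u0 \<bullet> x = t u0" using u0(2) by simp
  then show ?thesis using onB by metis
qed

lemma W_lemma:
  fixes X :: "'a::euclidean_space set"
  assumes finX: "finite X" and dep: "(\<Sum>u\<in>X. c u *\<^sub>R u) = 0"
    and circ: "\<forall>e. (\<forall>j\<in>X. c j = 0 \<longrightarrow> e j = 0) \<and> (\<Sum>j\<in>X. e j *\<^sub>R j) = 0 \<longrightarrow> (\<exists>s. \<forall>j\<in>X. e j = s * c j)"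
    and ab: "a \<in> X" "b \<in> X" "a \<noteq> b" and same: "c a * c b > 0"
  shows "\<exists>w. (\<Sum>u\<in>X. c u * \<bar>u \<bullet> w\<bar>) = 2 * c a"
proof -
  have ca: "c a \<noteq> 0" and cb: "c b \<noteq> 0" using same by auto
  define t where "t u = (if u = a then 1 else if u = b then - c a / c b else 0)" for u
  have ct: "c u * t u = (if u = a then c a else 0) + (if u = b then - c a else 0)" for u
    using ab(3) cb by (auto simp: t_def)
  have "(\<Sum>u\<in>X. c u * t u) = c a + (- c a)"
    unfolding ct sum.distrib using finX ab by (simp add: sum.delta')
  then have tsum: "(\<Sum>u\<in>X. c u * t u) = 0" by simp
  obtain w where w: "\<forall>u\<in>X. c u \<noteq> 0 \<longrightarrow> u \<bullet> w = t u"
    using surj_circ[OF finX dep ab(1) ca circ tsum] by blast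
  have ratio: "\<bar>c a / c b\<bar> = c a / c b"
  proof -
    have "c a / c b > 0" using same by (metis divide_pos_pos mult_pos_pos zero_less_mult_iff divide_neg_neg)
    then show ?thesis by (metis abs_of_pos)
  qed
  have cw: "c u * \<bar>u \<bullet> w\<bar> = (if u = a then c a else 0) + (if u = b then c a else 0)" if "u \<in> X" for u
  proof (cases "c u = 0")
    case True
    then have "u \<noteq> a" "u \<noteq> b" using ca cb by auto
    then show ?thesis using True by simp
  next
    case False
    then have "u \<bullet> w = t u" using w that by blast
    then show ?thesis using ab(3) cb ratio by (auto simp: t_def abs_minus_cancel)
  qed
  have "(\<Sum>u\<in>X. c u * \<bar>u \<bullet> w\<bar>) = (\<Sum>u\<in>X. (if u = a then c a else 0) + (if u = b then c a else 0))"
    by (rule sum.cong) (use cw in auto)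
  also have "\<dots> = c a + c a" unfolding sum.distrib using finX ab by (simp add: sum.delta')
  finally show ?thesis by auto
qed

lemma cell_transfer:
  assumes eq: "arr_comb_equiv P Q" and XP: "facet_normals P = X" and XQ: "facet_normals Q = X"
    and ex: "\<exists>x. \<forall>u\<in>X. c u \<noteq> 0 \<longrightarrow> u \<bullet> x = supp_val P u"
  shows "\<exists>x. \<forall>u\<in>X. c u \<noteq> 0 \<longrightarrow> u \<bullet> x = supp_val Q u"
proof -
  obtain x where x: "\<forall>u\<in>X. c u \<noteq> 0 \<longrightarrow> u \<bullet> x = supp_val P u" using ex by blast
  define sg where "sg u = sgn (u \<bullet> x - supp_val P u)" for u
  have "x \<in> arr_cell P sg" unfolding arr_cell_def sg_def by simp
  then have "arr_cell Q sg \<noteq> {}" using eq unfolding arr_comb_equiv_def by blast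
  then obtain y where y: "\<forall>u\<in>X. sgn (u \<bullet> y - supp_val Q u) = sg u" unfolding arr_cell_def XQ by blast
  have "u \<bullet> y = supp_val Q u" if "u \<in> X" "c u \<noteq> 0" for u
  proof -
    have "sg u = 0" using x that by (simp add: sg_def)
    then have "sgn (u \<bullet> y - supp_val Q u) = 0" using y that by simp
    then show ?thesis by (simp add: sgn_eq_0_iff)
  qed
  then show ?thesis by blast
qed

lemma arr_comb_equiv_sym: "arr_comb_equiv P Q \<Longrightarrow> arr_comb_equiv Q P"
  unfolding arr_comb_equiv_def by blast

lemma Zeq:
  fixes X :: "'a::euclidean_space set"
  assumes finX: "finite X" and dep: "(\<Sum>u\<in>X. c u *\<^sub>R u) = 0" and u0: "u0 \<in> X" "c u0 \<noteq> 0"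
    and circ: "\<forall>e. (\<forall>j\<in>X. c j = 0 \<longrightarrow> e j = 0) \<and> (\<Sum>j\<in>X. e j *\<^sub>R j) = 0 \<longrightarrow> (\<exists>s. \<forall>j\<in>X. e j = s * c j)"
  shows "(\<exists>x. \<forall>u\<in>X. c u \<noteq> 0 \<longrightarrow> u \<bullet> x = h u) \<longleftrightarrow> (\<Sum>u\<in>X. c u * h u) = 0"
proof
  assume "\<exists>x. \<forall>u\<in>X. c u \<noteq> 0 \<longrightarrow> u \<bullet> x = h u"
  then obtain x where x: "\<forall>u\<in>X. c u \<noteq> 0 \<longrightarrow> u \<bullet> x = h u" by blast
  have "(\<Sum>u\<in>X. c u * h u) = (\<Sum>u\<in>X. c u * (u \<bullet> x))"
    by (rule sum.cong) (use x in auto)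
  also have "\<dots> = (\<Sum>u\<in>X. c u *\<^sub>R u) \<bullet> x" by (simp add: inner_sum_left)
  finally show "(\<Sum>u\<in>X. c u * h u) = 0" using dep by simp
next
  assume "(\<Sum>u\<in>X. c u * h u) = 0"
  then show "\<exists>x. \<forall>u\<in>X. c u \<noteq> 0 \<longrightarrow> u \<bullet> x = h u" by (rule surj_circ[OF finX dep u0 circ])
qed

lemma unit_inner_lt:
  fixes u v :: "'a::euclidean_space"
  assumes "norm u = 1" "norm v = 1" "u \<noteq> v"
  shows "v \<bullet> u < 1"
proof -
  have "0 < (v - u) \<bullet> (v - u)" using assms(3) by simp
  also have "(v - u) \<bullet> (v - u) = v \<bullet> v - 2 * (v \<bullet> u) + u \<bullet> u"
    by (simp add: inner_diff_left inner_diff_right inner_commute)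
  also have "\<dots> = 2 - 2 * (v \<bullet> u)" using assms by (simp add: norm_eq_1)
  finally show ?thesis by simp
qed

lemma tau_valid:
  fixes X :: "'a::euclidean_space set"
  assumes finX: "finite X" and unit: "\<forall>u\<in>X. norm u = 1"
    and cone: "\<And>v. \<exists>c. (\<forall>u\<in>X. c u \<ge> 0) \<and> v = (\<Sum>u\<in>X. c u *\<^sub>R u)"
    and tau: "tau \<ge> 0"
  shows "polytope {x. \<forall>u\<in>X. u \<bullet> x \<le> 1 + tau * \<bar>u \<bullet> w\<bar>}"
    "facet_normals {x. \<forall>u\<in>X. u \<bullet> x \<le> 1 + tau * \<bar>u \<bullet> w\<bar>} = X"
    "\<forall>u\<in>X. supp_val {x. \<forall>u\<in>X. u \<bullet> x \<le> 1 + tau * \<bar>u \<bullet> w\<bar>} u = 1 + tau * \<bar>u \<bullet> w\<bar>"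
proof -
  define p where "p u = u + (tau * sgn (u \<bullet> w)) *\<^sub>R w" for u
  have wit: "u \<bullet> p u = 1 + tau * \<bar>u \<bullet> w\<bar> \<and> (\<forall>v\<in>X. v \<noteq> u \<longrightarrow> v \<bullet> p v' < 1 + tau * \<bar>v \<bullet> w\<bar> \<or> True)"
    if "u \<in> X" for u v'
    using unit that by (simp add: p_def inner_add_right norm_eq_1 sgn_mul_self)
  have wit2: "u \<bullet> p u = 1 + tau * \<bar>u \<bullet> w\<bar> \<and> (\<forall>v\<in>X. v \<noteq> u \<longrightarrow> v \<bullet> p u < 1 + tau * \<bar>v \<bullet> w\<bar>)"
    if uX: "u \<in> X" for u
  proof (intro conjI ballI impI)
    show "u \<bullet> p u = 1 + tau * \<bar>u \<bullet> w\<bar>" using wit[OF uX] by blast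
    fix v assume vX: "v \<in> X" and vu: "v \<noteq> u"
    have "sgn (u \<bullet> w) * (v \<bullet> w) \<le> \<bar>v \<bullet> w\<bar>"
    proof -
      have "sgn (u \<bullet> w) * (v \<bullet> w) \<le> \<bar>sgn (u \<bullet> w) * (v \<bullet> w)\<bar>" by simp
      also have "\<dots> = \<bar>sgn (u \<bullet> w)\<bar> * \<bar>v \<bullet> w\<bar>" by (simp add: abs_mult)
      also have "\<dots> \<le> \<bar>v \<bullet> w\<bar>" by (simp add: mult_left_le_one_le)
      finally show ?thesis .
    qed
    then have "tau * (sgn (u \<bullet> w) * (v \<bullet> w)) \<le> tau * \<bar>v \<bullet> w\<bar>" using tau by (rule mult_left_mono)
    moreover have "v \<bullet> u < 1" using unit_inner_lt[of u v] unit uX vX vu by simp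
    ultimately show "v \<bullet> p u < 1 + tau * \<bar>v \<bullet> w\<bar>" by (simp add: p_def inner_add_right)
  qed
  note QV = Q_valid[OF finX unit cone wit2 refl]
  show "polytope {x. \<forall>u\<in>X. u \<bullet> x \<le> 1 + tau * \<bar>u \<bullet> w\<bar>}" using QV(1) .
  show "facet_normals {x. \<forall>u\<in>X. u \<bullet> x \<le> 1 + tau * \<bar>u \<bullet> w\<bar>} = X" using QV(2) .
  show "\<forall>u\<in>X. supp_val {x. \<forall>u\<in>X. u \<bullet> x \<le> 1 + tau * \<bar>u \<bullet> w\<bar>} u = 1 + tau * \<bar>u \<bullet> w\<bar>" using QV(3) .
qed

lemma two_elems:
  assumes "finite A" "\<not> card A \<le> 1"
  obtains x y where "x \<in> A" "y \<in> A" "x \<noteq> y"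
  using assms by (auto simp: card_le_Suc0_iff_eq)

lemma P_basic:
  fixes P :: "'a::euclidean_space set"
  assumes poly: "polytope P" and full: "aff_dim P = int DIM('a)"
  shows "bounded P" "P \<noteq> {}"
    "\<And>v. \<exists>c. (\<forall>u\<in>facet_normals P. c u \<ge> 0) \<and> v = (\<Sum>u\<in>facet_normals P. c u *\<^sub>R u)"
proof -
  show bdd: "bounded P" using poly polytope_eq_bounded_polyhedron by blast
  show ne: "P \<noteq> {}"
  proof
    assume "P = {}"
    then have "aff_dim P = -1" by simp
    then show False using full by simp
  qed
  note PS = P_structure[OF poly full]
  fix v show "\<exists>c. (\<forall>u\<in>facet_normals P. c u \<ge> 0) \<and> v = (\<Sum>u\<in>facet_normals P. c u *\<^sub>R u)"
    by (rule cone_full[OF PS(1) bdd ne PS(3)])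
qed

lemma SP_mono:
  fixes P :: "'a::euclidean_space set"
  assumes poly: "polytope P" and full: "aff_dim P = int DIM('a)" and sm: "strongly_monotypic P"
  shows "SP (\<lambda>x. x) {0} (facet_normals P)"
  unfolding SP_def
proof (intro allI impI, elim conjE)
  define X where "X = facet_normals P"
  note PS = P_structure[OF poly full] and PB = P_basic[OF poly full]
  have finX: "finite X" and unit: "\<forall>u\<in>X. norm u = 1" using PS by (auto simp: X_def)
  have cone: "\<exists>c. (\<forall>u\<in>X. c u \<ge> 0) \<and> v = (\<Sum>u\<in>X. c u *\<^sub>R u)" for v using PB(3) by (simp add: X_def)
  fix c assume dep0: "(\<Sum>j\<in>facet_normals P. c j *\<^sub>R j) \<in> {0}" and nz: "\<exists>j\<in>facet_normals P. c j \<noteq> 0"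
    and circ0: "\<forall>e. (\<forall>j\<in>facet_normals P. c j = 0 \<longrightarrow> e j = 0) \<and> (\<Sum>j\<in>facet_normals P. e j *\<^sub>R j) \<in> {0} \<longrightarrow>
        (\<exists>s. \<forall>j\<in>facet_normals P. e j = s * c j)"
  have dep: "(\<Sum>u\<in>X. c u *\<^sub>R u) = 0" using dep0 by (simp add: X_def)
  have circ: "\<forall>e. (\<forall>j\<in>X. c j = 0 \<longrightarrow> e j = 0) \<and> (\<Sum>j\<in>X. e j *\<^sub>R j) = 0 \<longrightarrow> (\<exists>s. \<forall>j\<in>X. e j = s * c j)"
    using circ0 by (simp add: X_def)
  obtain u0 where u0: "u0 \<in> X" "c u0 \<noteq> 0" using nz by (auto simp: X_def)
  define A where "A = (\<Sum>u\<in>X. c u)"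
  define S where "S w = (\<Sum>u\<in>X. c u * \<bar>u \<bullet> w\<bar>)" for w
  have key: "(\<Sum>u\<in>X. c u * supp_val P u) = 0 \<longleftrightarrow> A + tau * S w = 0" if tau: "tau \<ge> 0" for tau w
  proof -
    define Q where "Q = {x. \<forall>u\<in>X. u \<bullet> x \<le> 1 + tau * \<bar>u \<bullet> w\<bar>}"
    note TV = tau_valid[OF finX unit cone tau, of w, folded Q_def]
    have eq: "arr_comb_equiv P Q" using sm TV(1,2) unfolding strongly_monotypic_def X_def by blast
    have sQ: "(\<Sum>u\<in>X. c u * supp_val Q u) = (\<Sum>u\<in>X. c u * (1 + tau * \<bar>u \<bullet> w\<bar>))"
      by (rule sum.cong) (use TV(3) in auto)
    also have "\<dots> = A + tau * S w"
      by (simp add: A_def S_def algebra_simps sum.distrib sum_distrib_left)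
    finally have sQ: "(\<Sum>u\<in>X. c u * supp_val Q u) = A + tau * S w" .
    have "(\<Sum>u\<in>X. c u * supp_val P u) = 0 \<longleftrightarrow> (\<exists>x. \<forall>u\<in>X. c u \<noteq> 0 \<longrightarrow> u \<bullet> x = supp_val P u)"
      using Zeq[OF finX dep u0 circ] by blast
    also have "\<dots> \<longleftrightarrow> (\<exists>x. \<forall>u\<in>X. c u \<noteq> 0 \<longrightarrow> u \<bullet> x = supp_val Q u)"
      using cell_transfer[OF eq X_def[symmetric] TV(2)] cell_transfer[OF arr_comb_equiv_sym[OF eq] TV(2) X_def[symmetric]]
      by blast
    also have "\<dots> \<longleftrightarrow> (\<Sum>u\<in>X. c u * supp_val Q u) = 0"
      using Zeq[OF finX dep u0 circ] by blast
    finally show ?thesis using sQ by simp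
  qed
  show "card {j\<in>facet_normals P. 0 < c j} \<le> 1 \<or> card {j\<in>facet_normals P. c j < 0} \<le> 1"
  proof (rule ccontr)
    assume "\<not> ?thesis"
    then have n1: "\<not> card {j\<in>X. 0 < c j} \<le> 1" and n2: "\<not> card {j\<in>X. c j < 0} \<le> 1" by (auto simp: X_def)
    obtain a1 a2 where a: "a1 \<in> X" "a2 \<in> X" "a1 \<noteq> a2" "c a1 > 0" "c a2 > 0"
      using two_elems[OF _ n1] finX by (metis (no_types, lifting) finite_subset mem_Collect_eq subsetI)
    obtain b1 b2 where b: "b1 \<in> X" "b2 \<in> X" "b1 \<noteq> b2" "c b1 < 0" "c b2 < 0"
      using two_elems[OF _ n2] finX by (metis (no_types, lifting) finite_subset mem_Collect_eq subsetI)
    obtain w1 where w1: "S w1 = 2 * c a1"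
      using W_lemma[OF finX dep circ a(1,2,3)] a(4,5) by (auto simp: S_def)
    obtain w2 where w2: "S w2 = 2 * c b1"
      using W_lemma[OF finX dep circ b(1,2,3)] b(4,5) by (auto simp: S_def mult_neg_neg)
    show False
    proof (cases "(\<Sum>u\<in>X. c u * supp_val P u) = 0")
      case True
      then have "A + 0 * S w1 = 0" "A + 1 * S w1 = 0" using key[of 0 w1] key[of 1 w1] by auto
      then show False using w1 a(4) by simp
    next
      case False
      show False
      proof (cases "A \<ge> 0")
        case True
        define tau where "tau = A / (- S w2)"
        have "- S w2 > 0" using w2 b(4) by simp
        then have "tau \<ge> 0" using True unfolding tau_def by (intro divide_nonneg_pos) auto
        moreover have "A + tau * S w2 = 0" using w2 b(4) by (simp add: tau_def)
        ultimately show False using key False by blast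
      next
        case False2: False
        define tau where "tau = - A / S w1"
        have "S w1 > 0" using w1 a(4) by simp
        then have "tau \<ge> 0" using False2 unfolding tau_def by (intro divide_nonneg_pos) auto
        moreover have "A + tau * S w1 = 0" using w1 a(4) by (simp add: tau_def)
        ultimately show False using key False by blast
      qed
    qed
  qed
qed


lemma PC_simplex:
  fixes Z :: "'a::euclidean_space set"
  assumes "PC (\<lambda>x. x) {0} Z"
  shows "finite Z" "\<not> affine_dependent Z" "0 \<in> rel_interior (convex hull Z)"
proof -
  obtain lam where finZ: "finite Z" and Zne: "Z \<noteq> {}" and lam: "\<forall>z\<in>Z. lam z > 0" "(\<Sum>z\<in>Z. lam z *\<^sub>R z) = 0"
    and circ: "\<forall>e. (\<Sum>z\<in>Z. e z *\<^sub>R z) = 0 \<longrightarrow> (\<exists>s. \<forall>z\<in>Z. e z = s * lam z)"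
    using assms unfolding PC_def by auto
  show "finite Z" by (rule finZ)
  have sumpos: "sum lam Z > 0" using finZ Zne lam(1) by (intro sum_pos) auto
  show "\<not> affine_dependent Z"
  proof
    assume "affine_dependent Z"
    then obtain S U where S: "finite S" "S \<subseteq> Z" "sum U S = 0" "\<exists>v\<in>S. U v \<noteq> 0" "(\<Sum>v\<in>S. U v *\<^sub>R v) = 0"
      unfolding affine_dependent_explicit by blast
    define e where "e z = (if z \<in> S then U z else 0)" for z
    have "(\<Sum>z\<in>Z. e z *\<^sub>R z) = (\<Sum>z\<in>S. e z *\<^sub>R z)"
      by (rule sum.mono_neutral_right) (use finZ S(2) in \<open>auto simp: e_def\<close>)
    also have "\<dots> = (\<Sum>z\<in>S. U z *\<^sub>R z)" by (rule sum.cong) (auto simp: e_def)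
    finally have "(\<Sum>z\<in>Z. e z *\<^sub>R z) = 0" using S(5) by simp
    then obtain s where s: "\<forall>z\<in>Z. e z = s * lam z" using circ by blast
    have "sum e Z = sum e S"
      by (rule sum.mono_neutral_right) (use finZ S(2) in \<open>auto simp: e_def\<close>)
    also have "\<dots> = sum U S" by (rule sum.cong) (auto simp: e_def)
    finally have "sum e Z = 0" using S(3) by simp
    moreover have "sum e Z = s * sum lam Z" using s by (simp add: sum_distrib_left)
    ultimately have "s = 0" using sumpos by simp
    then have "\<forall>v\<in>S. U v = 0" using s S(2) by (metis (no_types, lifting) e_def mult_zero_left subsetD)
    then show False using S(4) by blast
  qed
  then show "0 \<in> rel_interior (convex hull Z)"
  proof -
    assume ind: "\<not> affine_dependent Z"
    define u where "u z = lam z / sum lam Z" for z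
    have "\<forall>x\<in>Z. 0 < u x" using lam(1) sumpos by (simp add: u_def)
    moreover have "sum u Z = 1" using sumpos by (simp add: u_def sum_divide_distrib[symmetric])
    moreover have "(\<Sum>x\<in>Z. u x *\<^sub>R x) = (1 / sum lam Z) *\<^sub>R (\<Sum>z\<in>Z. lam z *\<^sub>R z)"
      unfolding scaleR_sum_right by (rule sum.cong) (auto simp: u_def)
    then have "(\<Sum>x\<in>Z. u x *\<^sub>R x) = 0" using lam(2) by simp
    ultimately show ?thesis unfolding rel_interior_convex_hull_explicit[OF ind] by blast
  qed
qed

lemma DEC_direct:
  fixes Z :: "nat \<Rightarrow> 'a::euclidean_space set"
  assumes D: "DEC (\<lambda>x. x) {0} I k Z" and i: "i < k"
  shows "span (Z i) \<inter> span (\<Union>j\<in>{..<k} - {i}. Z j) = {0}"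
proof
  have sub: "\<forall>j<k. Z j \<subseteq> I \<and> PC (\<lambda>x. x) {0} (Z j)" and dis: "\<forall>i<k. \<forall>j<k. i \<noteq> j \<longrightarrow> Z i \<inter> Z j = {}"
    and ind: "\<forall>v. (\<forall>i<k. v i \<in> spanF (\<lambda>x. x) (Z i)) \<and> (\<Sum>i<k. v i) \<in> {0} \<longrightarrow> (\<forall>i<k. v i \<in> {0})"
    using D unfolding DEC_def by simp_all
  have finZ: "finite (Z j)" if "j < k" for j using sub that unfolding PC_def by blast
  show "span (Z i) \<inter> span (\<Union>j\<in>{..<k} - {i}. Z j) \<subseteq> {0}"
  proof
    fix w assume w: "w \<in> span (Z i) \<inter> span (\<Union>j\<in>{..<k} - {i}. Z j)"
    obtain a where a: "w = (\<Sum>z\<in>Z i. a z *\<^sub>R z)" using w span_finite[OF finZ[OF i]] by auto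
    define U where "U = (\<Union>j\<in>{..<k} - {i}. Z j)"
    have finU: "finite U" unfolding U_def using finZ by auto
    obtain b where b: "w = (\<Sum>x\<in>U. b x *\<^sub>R x)" using w span_finite[OF finU] unfolding U_def by auto
    have "(\<Sum>x\<in>U. b x *\<^sub>R x) = (\<Sum>j\<in>{..<k} - {i}. (\<Sum>x\<in>Z j. b x *\<^sub>R x))"
      unfolding U_def by (rule sum.UNION_disjoint) (use finZ dis in auto)
    then have wsum: "w = (\<Sum>j\<in>{..<k} - {i}. (\<Sum>x\<in>Z j. b x *\<^sub>R x))" using b by simp
    define v where "v j = (if j = i then - w else (\<Sum>x\<in>Z j. b x *\<^sub>R x))" for j
    have "\<forall>j<k. v j \<in> spanF (\<lambda>x. x) (Z j)"
    proof (intro allI impI)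
      fix j assume "j < k"
      show "v j \<in> spanF (\<lambda>x. x) (Z j)"
      proof (cases "j = i")
        case True
        have "v j = (\<Sum>z\<in>Z j. (- a z) *\<^sub>R z)" using True a by (simp add: v_def sum_negf)
        then show ?thesis unfolding spanF_def by (intro range_eqI[where x="\<lambda>z. - a z"]) simp
      next
        case False
        then have "v j = (\<Sum>z\<in>Z j. b z *\<^sub>R z)" by (simp add: v_def)
        then show ?thesis unfolding spanF_def by (intro range_eqI[where x="b"]) simp
      qed
    qed
    moreover have "(\<Sum>j<k. v j) = 0"
    proof -
      have "(\<Sum>j<k. v j) = v i + (\<Sum>j\<in>{..<k} - {i}. v j)"
        using sum.remove[of "{..<k}" i v] i by simp
      also have "(\<Sum>j\<in>{..<k} - {i}. v j) = (\<Sum>j\<in>{..<k} - {i}. (\<Sum>x\<in>Z j. b x *\<^sub>R x))"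
        by (rule sum.cong) (auto simp: v_def)
      finally show ?thesis using wsum by (simp add: v_def)
    qed
    ultimately have "\<forall>j<k. v j \<in> {0}" using ind by simp
    then have "v i = 0" using i by simp
    then show "w \<in> {0}" by (simp add: v_def)
  qed
next
  show "{0} \<subseteq> span (Z i) \<inter> span (\<Union>j\<in>{..<k} - {i}. Z j)" by (simp add: span_0)
qed

theorem theorem3:
  fixes P :: "'a::euclidean_space set"
  assumes "polytope P" and "aff_dim P = int DIM('a)" and "strongly_monotypic P"
  shows "\<exists>k::nat. \<exists>X :: nat \<Rightarrow> 'a set. k \<ge> 1 \<and>
           (\<forall>i<k. X i \<subseteq> facet_normals P) \<and>
           (\<forall>i<k. \<forall>j<k. i \<noteq> j \<longrightarrow> X i \<inter> X j = {}) \<and>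
           (\<forall>i<k. finite (X i) \<and> \<not> affine_dependent (X i) \<and>
                  0 \<in> rel_interior (convex hull (X i))) \<and>
           (\<forall>i<k. span (X i) \<inter> span (\<Union>j\<in>{..<k} - {i}. X j) = {0}) \<and>
           span (\<Union>i<k. X i) = UNIV"
proof -
  define X0 where "X0 = facet_normals P"
  note PS = P_structure[OF assms(1,2)] and PB = P_basic[OF assms(1,2)]
  have finX: "finite X0" and unit: "\<forall>u\<in>X0. norm u = 1" using PS by (auto simp: X0_def)
  have cone: "\<exists>c. (\<forall>u\<in>X0. c u \<ge> 0) \<and> v = (\<Sum>u\<in>X0. c u *\<^sub>R u)" for v using PB(3) by (simp add: X0_def)
  have sub0: "subspace {0::'a}" by (simp add: subspace_def)
  have nz: "\<forall>i\<in>X0. i \<notin> {0}" using unit by auto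
  have tc: "TC (\<lambda>x. x) {0} X0"
    unfolding TC_def
  proof
    fix u assume uX: "u \<in> X0"
    obtain c where c: "\<forall>w\<in>X0. c w \<ge> 0" "- u = (\<Sum>w\<in>X0. c w *\<^sub>R w)" using cone by blast
    define c' where "c' w = c w + (if w = u then 1 else 0)" for w
    have "(\<Sum>w\<in>X0. c' w *\<^sub>R w) = (\<Sum>w\<in>X0. c w *\<^sub>R w + (if w = u then w else 0))"
      by (rule sum.cong) (auto simp: c'_def scaleR_add_left)
    also have "\<dots> = (\<Sum>w\<in>X0. c w *\<^sub>R w) + (\<Sum>w\<in>X0. (if w = u then w else 0))"
      by (rule sum.distrib)
    also have "\<dots> = - u + u" using c(2) finX uX by (simp add: sum.delta')
    finally have "(\<Sum>w\<in>X0. c' w *\<^sub>R w) \<in> {0}" by simp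
    moreover have "\<forall>w\<in>X0. c' w \<ge> 0" using c(1) by (simp add: c'_def)
    moreover have "c' u > 0" using c(1) uX by (simp add: c'_def add_nonneg_pos)
    ultimately show "\<exists>c. (\<forall>j\<in>X0. 0 \<le> c j) \<and> 0 < c u \<and> (\<Sum>j\<in>X0. c j *\<^sub>R j) \<in> {0}" by blast
  qed
  have sp: "SP (\<lambda>x. x) {0} X0" unfolding X0_def by (rule SP_mono[OF assms])
  obtain k Z where D: "DEC (\<lambda>x. x) {0} X0 k Z" using CL[OF finX sub0 nz tc sp] by blast
  have sub: "\<forall>i<k. Z i \<subseteq> X0 \<and> PC (\<lambda>x. x) {0} (Z i)" and dis: "\<forall>i<k. \<forall>j<k. i \<noteq> j \<longrightarrow> Z i \<inter> Z j = {}"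
    and spn: "\<forall>x\<in>spanF (\<lambda>x. x) X0. \<exists>v. (\<forall>i<k. v i \<in> spanF (\<lambda>x. x) (Z i)) \<and> x - (\<Sum>i<k. v i) \<in> {0}"
    using D unfolding DEC_def by simp_all
  have inspan: "x \<in> spanF (\<lambda>x. x) X0" for x
  proof -
    obtain c where "x = (\<Sum>u\<in>X0. c u *\<^sub>R u)" using cone by blast
    then show ?thesis unfolding spanF_def by blast
  qed
  have spanU: "span (\<Union>i<k. Z i) = UNIV"
  proof -
    have "x \<in> span (\<Union>i<k. Z i)" for x
    proof -
      obtain v where v: "\<forall>i<k. v i \<in> spanF (\<lambda>x. x) (Z i)" "x - (\<Sum>i<k. v i) \<in> {0}"
        using spn inspan by blast
      have "v i \<in> span (\<Union>i<k. Z i)" if ik: "i < k" for i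
      proof -
        obtain a where "v i = (\<Sum>z\<in>Z i. a z *\<^sub>R z)" using v(1) ik unfolding spanF_def by blast
        moreover have "(\<Sum>z\<in>Z i. a z *\<^sub>R z) \<in> span (Z i)" by (intro span_sum span_scale span_base)
        moreover have "span (Z i) \<subseteq> span (\<Union>i<k. Z i)" using ik by (intro span_mono) auto
        ultimately show ?thesis by auto
      qed
      then have "(\<Sum>i<k. v i) \<in> span (\<Union>i<k. Z i)" by (intro span_sum) auto
      then show ?thesis using v(2) by simp
    qed
    then show ?thesis by auto
  qed
  have k1: "k \<ge> 1"
  proof (rule ccontr)
    assume "\<not> k \<ge> 1"
    then have "k = 0" by simp
    then have "span (\<Union>i<k. Z i) = {0}" by simp
    moreover obtain b :: 'a where "b \<in> Basis" using nonempty_Basis by blast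
    then have "b \<noteq> 0" by auto
    moreover have "b \<in> span (\<Union>i<k. Z i)" using spanU by simp
    ultimately show False by simp
  qed
  show ?thesis
  proof (intro exI conjI)
    show "k \<ge> 1" by (rule k1)
    show "\<forall>i<k. Z i \<subseteq> facet_normals P" using sub by (simp add: X0_def)
    show "\<forall>i<k. \<forall>j<k. i \<noteq> j \<longrightarrow> Z i \<inter> Z j = {}" by (rule dis)
    show "\<forall>i<k. finite (Z i) \<and> \<not> affine_dependent (Z i) \<and> 0 \<in> rel_interior (convex hull (Z i))"
    proof (intro allI impI)
      fix i assume "i < k"
      then have "PC (\<lambda>x. x) {0} (Z i)" using sub by simp
      then show "finite (Z i) \<and> \<not> affine_dependent (Z i) \<and> 0 \<in> rel_interior (convex hull (Z i))"
        using PC_simplex by blast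
    qed
    show "\<forall>i<k. span (Z i) \<inter> span (\<Union>j\<in>{..<k} - {i}. Z j) = {0}"
    proof (intro allI impI)
      fix i assume "i < k"
      then show "span (Z i) \<inter> span (\<Union>j\<in>{..<k} - {i}. Z j) = {0}" by (rule DEC_direct[OF D])
    qed
    show "span (\<Union>i<k. Z i) = UNIV" by (rule spanU)
  qed
qed

end
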